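(* Let $E$ be a regular hermitian $(a,b)$-module of rank $n$. Suppose there exists $\lambda\in\mathbb{C}$ such that $E$ contains two distinct normal sub-$(a,b)$-modules $F\simeq E_f$ and $G\simeq E_g$ of rank one with $f\equiv g\equiv\lambda \pmod{\mathbb{Z}}$. Then there exist normal sub-$(a,b)$-modules $F_1\subset F_{n-1}$ of $E$, of ranks $1$ and $n-1$ respectively, such that the adjoint of $E/F_{n-1}$ is isomorphic to $F_1$ and $F_{n-1}/F_1$ is hermitian.
   Context: An $(a,b)$-module is a free module $E$ of finite rank over $\mathbb{C}[[b]]$ with a $\mathbb{C}$-linear endomorphism $a$ satisfying $ab-ba=b^2$. A sub-$(a,b)$-module is a sub-$\mathbb{C}[[b]]$-module stable by $a$; it is normal if the quotient is free over $\mathbb{C}[[b]]$. $E$ is regular if it embeds into an $(a,b)$-module $E'$ with $aE'\subset bE'$. $E_\lambda$ is the rank-one (elementary) $(a,b)$-module generated by $e_\lambda$ with $ae_\lambda=\lambda be_\lambda$; $\lambda$ is its parameter. The dual $M^*$ of an $(a,b)$-module $M$ is $\mathrm{Hom}_{\mathbb{C}[[b]]}(M,E_0)$ with $(a\cdot\phi)(x)=a\phi(x)-\phi(ax)$; the conjugate $\breve M$ is the set $M$ with $a,b$ replaced by $-a,-b$; the adjoint $\check{M}^*$ is the conjugate of $M^*$. An $(a,b)$-hermitian form on $M$ is a $\mathbb{C}[[b]]$-bilinear $H:M\times\breve M\to E_0$ with $aH(v,w)=H(av,w)+H(v,a_{\breve M}w)$ (where $a_{\breve M}=-a$) and such that $H(v,w)=S(b)e_0$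 implies $H(w,v)=S(-b)e_0$; it is non-degenerate if $y\mapsto H(\cdot,y)$ is an isomorphism $M\to\check{M}^*$. $M$ is hermitian if it admits a non-degenerate hermitian form. *)

theory Defs
  imports "HOL-Computational_Algebra.Formal_Power_Series"
begin

section \<open>(a,b)-modules over C[[b]] (b = fps_X), with explicit carriers\<close>

record 'v abmod =
  ab_carr :: "'v set"
  ab_zero :: 'v
  ab_add  :: "'v \<Rightarrow> 'v \<Rightarrow> 'v"
  ab_smul :: "complex fps \<Rightarrow> 'v \<Rightarrow> 'v"
  ab_a    :: "'v \<Rightarrow> 'v"

definition fps_reflect :: "complex fps \<Rightarrow> complex fps" where
  "fps_reflect S = Abs_fps (\<lambda>n. (-1) ^ n * fps_nth S n)"

text \<open>C[[b]]-module axioms on the carrier, plus a C-linear endomorphism a with ab - ba = b^2\<close>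
definition ab_premodule :: "'v abmod \<Rightarrow> bool" where
  "ab_premodule M \<longleftrightarrow>
     ab_zero M \<in> ab_carr M \<and>
     (\<forall>x\<in>ab_carr M. \<forall>y\<in>ab_carr M. ab_add M x y \<in> ab_carr M) \<and>
     (\<forall>s. \<forall>x\<in>ab_carr M. ab_smul M s x \<in> ab_carr M) \<and>
     (\<forall>x\<in>ab_carr M. ab_a M x \<in> ab_carr M) \<and>
     (\<forall>x\<in>ab_carr M. \<forall>y\<in>ab_carr M. \<forall>z\<in>ab_carr M.
        ab_add M (ab_add M x y) z = ab_add M x (ab_add M y z)) \<and>
     (\<forall>x\<in>ab_carr M. \<forall>y\<in>ab_carr M. ab_add M x y = ab_add M y x) \<and>
     (\<forall>x\<in>ab_carr M. ab_add M (ab_zero M) x = x) \<and>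
     (\<forall>x\<in>ab_carr M. \<exists>y\<in>ab_carr M. ab_add M x y = ab_zero M) \<and>
     (\<forall>s. \<forall>x\<in>ab_carr M. \<forall>y\<in>ab_carr M.
        ab_smul M s (ab_add M x y) = ab_add M (ab_smul M s x) (ab_smul M s y)) \<and>
     (\<forall>s t. \<forall>x\<in>ab_carr M. ab_smul M (s + t) x = ab_add M (ab_smul M s x) (ab_smul M t x)) \<and>
     (\<forall>s t. \<forall>x\<in>ab_carr M. ab_smul M (s * t) x = ab_smul M s (ab_smul M t x)) \<and>
     (\<forall>x\<in>ab_carr M. ab_smul M 1 x = x) \<and>
     (\<forall>x\<in>ab_carr M. \<forall>y\<in>ab_carr M. ab_a M (ab_add M x y) = ab_add M (ab_a M x) (ab_a M y)) \<and>
     (\<forall>c. \<forall>x\<in>ab_carr M. ab_a M (ab_smul M (fps_const c) x) = ab_smul M (fps_const c) (ab_a M x)) \<and>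
     (\<forall>x\<in>ab_carr M. ab_a M (ab_smul M fps_X x) =
        ab_add M (ab_smul M fps_X (ab_a M x)) (ab_smul M (fps_X ^ 2) x))"

definition lincomb :: "'v abmod \<Rightarrow> complex fps list \<Rightarrow> 'v list \<Rightarrow> 'v" where
  "lincomb M cs vs = foldr (\<lambda>(c, v) acc. ab_add M (ab_smul M c v) acc) (zip cs vs) (ab_zero M)"

definition is_basis :: "'v abmod \<Rightarrow> 'v list \<Rightarrow> bool" where
  "is_basis M vs \<longleftrightarrow> set vs \<subseteq> ab_carr M \<and>
     (\<forall>x\<in>ab_carr M. \<exists>!cs. length cs = length vs \<and> lincomb M cs vs = x)"

definition has_rank :: "'v abmod \<Rightarrow> nat \<Rightarrow> bool" where
  "has_rank M n \<longleftrightarrow> (\<exists>vs. is_basis M vs \<and> length vs = n)"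

definition is_abmod :: "'v abmod \<Rightarrow> bool" where
  "is_abmod M \<longleftrightarrow> ab_premodule M \<and> (\<exists>n. has_rank M n)"

definition ab_hom :: "'v abmod \<Rightarrow> 'w abmod \<Rightarrow> ('v \<Rightarrow> 'w) \<Rightarrow> bool" where
  "ab_hom M N h \<longleftrightarrow>
     (\<forall>x\<in>ab_carr M. h x \<in> ab_carr N) \<and>
     (\<forall>x\<in>ab_carr M. \<forall>y\<in>ab_carr M. h (ab_add M x y) = ab_add N (h x) (h y)) \<and>
     (\<forall>s. \<forall>x\<in>ab_carr M. h (ab_smul M s x) = ab_smul N s (h x)) \<and>
     (\<forall>x\<in>ab_carr M. h (ab_a M x) = ab_a N (h x))"

definition ab_iso_map :: "'v abmod \<Rightarrow> 'w abmod \<Rightarrow> ('v \<Rightarrow> 'w) \<Rightarrow> bool" where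
  "ab_iso_map M N h \<longleftrightarrow> ab_hom M N h \<and> bij_betw h (ab_carr M) (ab_carr N)"

definition ab_isomorphic :: "'v abmod \<Rightarrow> 'w abmod \<Rightarrow> bool" where
  "ab_isomorphic M N \<longleftrightarrow> (\<exists>h. ab_iso_map M N h)"

text \<open>elementary module E_lambda = C[[b]] e_lambda, a e_lambda = lambda b e_lambda,
  so a (S e_lambda) = (lambda b S + b^2 S') e_lambda\<close>
definition E_elem :: "complex \<Rightarrow> complex fps abmod" where
  "E_elem c = \<lparr> ab_carr = UNIV, ab_zero = 0, ab_add = (+), ab_smul = (*),
     ab_a = (\<lambda>S. fps_const c * fps_X * S + fps_X ^ 2 * fps_deriv S) \<rparr>"

definition is_sub :: "'v abmod \<Rightarrow> 'v set \<Rightarrow> bool" where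
  "is_sub M F \<longleftrightarrow> F \<subseteq> ab_carr M \<and> ab_zero M \<in> F \<and>
     (\<forall>x\<in>F. \<forall>y\<in>F. ab_add M x y \<in> F) \<and>
     (\<forall>s. \<forall>x\<in>F. ab_smul M s x \<in> F) \<and>
     (\<forall>x\<in>F. ab_a M x \<in> F)"

definition restr :: "'v abmod \<Rightarrow> 'v set \<Rightarrow> 'v abmod" where
  "restr M F = M\<lparr>ab_carr := F\<rparr>"

definition coset :: "'v abmod \<Rightarrow> 'v set \<Rightarrow> 'v \<Rightarrow> 'v set" where
  "coset M F x = {ab_add M x z | z. z \<in> F}"

definition quot :: "'v abmod \<Rightarrow> 'v set \<Rightarrow> 'v set abmod" where
  "quot M F = \<lparr> ab_carr = coset M F ` ab_carr M,
     ab_zero = coset M F (ab_zero M),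
     ab_add = (\<lambda>X Y. coset M F (ab_add M (SOME x. x \<in> X) (SOME y. y \<in> Y))),
     ab_smul = (\<lambda>s X. coset M F (ab_smul M s (SOME x. x \<in> X))),
     ab_a = (\<lambda>X. coset M F (ab_a M (SOME x. x \<in> X))) \<rparr>"

definition normal_sub :: "'v abmod \<Rightarrow> 'v set \<Rightarrow> bool" where
  "normal_sub M F \<longleftrightarrow> is_sub M F \<and> (\<exists>n. has_rank (quot M F) n)"

text \<open>dual M* = Hom_{C[[b]]}(M, E_0), (a.phi)(x) = a phi(x) - phi(a x);
  functions are taken to be 0 outside the carrier\<close>
definition dual :: "'v abmod \<Rightarrow> ('v \<Rightarrow> complex fps) abmod" where
  "dual M = \<lparr> ab_carr = {\<phi>. (\<forall>x\<in>ab_carr M. \<forall>y\<in>ab_carr M. \<phi> (ab_add M x y) = \<phi> x + \<phi> y) \<and>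
                          (\<forall>s. \<forall>x\<in>ab_carr M. \<phi> (ab_smul M s x) = s * \<phi> x) \<and>
                          (\<forall>x. x \<notin> ab_carr M \<longrightarrow> \<phi> x = 0)},
     ab_zero = (\<lambda>x. 0),
     ab_add = (\<lambda>\<phi> \<psi> x. \<phi> x + \<psi> x),
     ab_smul = (\<lambda>s \<phi> x. s * \<phi> x),
     ab_a = (\<lambda>\<phi> x. if x \<in> ab_carr M then ab_a (E_elem 0) (\<phi> x) - \<phi> (ab_a M x) else 0) \<rparr>"

text \<open>conjugate: a, b replaced by -a, -b (so S(b) acts as S(-b))\<close>
definition conj :: "'v abmod \<Rightarrow> 'v abmod" where
  "conj M = M\<lparr> ab_smul := (\<lambda>s x. ab_smul M (fps_reflect s) x),
               ab_a := (\<lambda>x. ab_smul M (-1) (ab_a M x)) \<rparr>"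

definition adjoint :: "'v abmod \<Rightarrow> ('v \<Rightarrow> complex fps) abmod" where
  "adjoint M = conj (dual M)"

text \<open>(a,b)-hermitian forms H : M x conj(M) -> E_0\<close>
definition herm_form :: "'v abmod \<Rightarrow> ('v \<Rightarrow> 'v \<Rightarrow> complex fps) \<Rightarrow> bool" where
  "herm_form M H \<longleftrightarrow>
     (\<forall>v\<in>ab_carr M. \<forall>v'\<in>ab_carr M. \<forall>w\<in>ab_carr M. H (ab_add M v v') w = H v w + H v' w) \<and>
     (\<forall>v\<in>ab_carr M. \<forall>w\<in>ab_carr M. \<forall>w'\<in>ab_carr M. H v (ab_add (conj M) w w') = H v w + H v w') \<and>
     (\<forall>s. \<forall>v\<in>ab_carr M. \<forall>w\<in>ab_carr M. H (ab_smul M s v) w = s * H v w) \<and>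
     (\<forall>s. \<forall>v\<in>ab_carr M. \<forall>w\<in>ab_carr M. H v (ab_smul (conj M) s w) = s * H v w) \<and>
     (\<forall>v\<in>ab_carr M. \<forall>w\<in>ab_carr M.
        ab_a (E_elem 0) (H v w) = H (ab_a M v) w + H v (ab_a (conj M) w)) \<and>
     (\<forall>v\<in>ab_carr M. \<forall>w\<in>ab_carr M. H w v = fps_reflect (H v w))"

definition herm_nondeg :: "'v abmod \<Rightarrow> ('v \<Rightarrow> 'v \<Rightarrow> complex fps) \<Rightarrow> bool" where
  "herm_nondeg M H \<longleftrightarrow>
     ab_iso_map M (adjoint M) (\<lambda>y x. if x \<in> ab_carr M then H x y else 0)"

definition hermitian :: "'v abmod \<Rightarrow> bool" where
  "hermitian M \<longleftrightarrow> (\<exists>H. herm_form M H \<and> herm_nondeg M H)"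

text \<open>Any free finite-rank
  C[[b]]-module is isomorphic to one with carrier inside nat \<Rightarrow> complex fps, so E'
  is taken with that carrier type.\<close>
definition regular :: "'v abmod \<Rightarrow> bool" where
  "regular M \<longleftrightarrow> (\<exists>E' :: (nat \<Rightarrow> complex fps) abmod. is_abmod E' \<and>
      (\<forall>x\<in>ab_carr E'. \<exists>y\<in>ab_carr E'. ab_a E' x = ab_smul E' fps_X y) \<and>
      (\<exists>h. ab_hom M E' h \<and> inj_on h (ab_carr M)))"

end

theory Submission
  imports Defs
begin


lemma reflect_nth[simp]: "fps_nth (fps_reflect S) n = (-1)^n * fps_nth S n"
  by (simp add: fps_reflect_def)

lemma reflect_add[simp]: "fps_reflect (S + T) = fps_reflect S + fps_reflect T"
  by (rule fps_ext) (simp add: algebra_simps)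
lemma reflect_diff[simp]: "fps_reflect (S - T) = fps_reflect S - fps_reflect T"
  by (rule fps_ext) (simp add: algebra_simps)
lemma reflect_uminus[simp]: "fps_reflect (- S) = - fps_reflect S"
  by (rule fps_ext) (simp add: algebra_simps)
lemma reflect_reflect[simp]: "fps_reflect (fps_reflect S) = S"
  by (rule fps_ext) (simp flip: power_mult_distrib)
lemma reflect_const[simp]: "fps_reflect (fps_const c) = fps_const c"
  by (rule fps_ext) simp
lemma reflect_0[simp]: "fps_reflect 0 = 0"
  by (rule fps_ext) simp
lemma reflect_1[simp]: "fps_reflect 1 = 1"
  by (rule fps_ext) simp
lemma reflect_X[simp]: "fps_reflect fps_X = - fps_X"
  by (rule fps_ext) (simp add: fps_X_def)
lemma reflect_mult[simp]: "fps_reflect (S * T) = fps_reflect S * fps_reflect T"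
proof (rule fps_ext)
  fix n
  have "fps_nth (fps_reflect (S * T)) n = (\<Sum>i=0..n. (-1)^n * (fps_nth S i * fps_nth T (n-i)))"
    by (simp add: fps_mult_nth sum_distrib_left)
  also have "\<dots> = (\<Sum>i=0..n. ((-1)^i * fps_nth S i) * ((-1)^(n-i) * fps_nth T (n-i)))"
  proof (rule sum.cong)
    fix i assume "i \<in> {0..n}"
    hence "(-1::complex)^n = (-1)^i * (-1)^(n-i)" by (simp flip: power_add)
    thus "(-1)^n * (fps_nth S i * fps_nth T (n-i)) = ((-1)^i * fps_nth S i) * ((-1)^(n-i) * fps_nth T (n-i))" by simp
  qed simp
  also have "\<dots> = fps_nth (fps_reflect S * fps_reflect T) n" by (simp add: fps_mult_nth)
  finally show "fps_nth (fps_reflect (S * T)) n = fps_nth (fps_reflect S * fps_reflect T) n" .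
qed
lemma reflect_power[simp]: "fps_reflect (S ^ k) = fps_reflect S ^ k"
  by (induct k) simp_all
lemma reflect_deriv: "fps_reflect (fps_deriv S) = - fps_deriv (fps_reflect S)"
  by (rule fps_ext) (simp add: algebra_simps)
lemma reflect_eq_0_iff[simp]: "fps_reflect S = 0 \<longleftrightarrow> S = 0"
  by (metis reflect_0 reflect_reflect)
lemma reflect_inj: "fps_reflect S = fps_reflect T \<longleftrightarrow> S = T"
  by (metis reflect_reflect)


section \<open>premodules\<close>

lemma lincomb_Nil_g[simp]: "lincomb N [] vs = ab_zero N" "lincomb N cs [] = ab_zero N"
  by (simp_all add: lincomb_def)
lemma lincomb_Cons_g[simp]: "lincomb N (c # cs) (v # vs) = ab_add N (ab_smul N c v) (lincomb N cs vs)"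
  by (simp add: lincomb_def)


locale pm =
  fixes M :: "'v abmod"
  assumes pm: "ab_premodule M"
begin

abbreviation "C \<equiv> ab_carr M"
abbreviation "pl \<equiv> ab_add M"
abbreviation "sm \<equiv> ab_smul M"
abbreviation "z0 \<equiv> ab_zero M"
abbreviation "aa \<equiv> ab_a M"

lemma P1: "z0 \<in> C" using pm unfolding ab_premodule_def by (elim conjE) assumption
lemma P2: "\<forall>x\<in>C. \<forall>y\<in>C. pl x y \<in> C" using pm unfolding ab_premodule_def by (elim conjE) assumption
lemma P3: "\<forall>s. \<forall>x\<in>C. sm s x \<in> C" using pm unfolding ab_premodule_def by (elim conjE) assumption
lemma P4: "\<forall>x\<in>C. aa x \<in> C" using pm unfolding ab_premodule_def by (elim conjE) assumption
lemma P5: "\<forall>x\<in>C. \<forall>y\<in>C. \<forall>z\<in>C. pl (pl x y) z = pl x (pl y z)" using pm unfolding ab_premodule_def by (elim conjE) assumption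
lemma P6: "\<forall>x\<in>C. \<forall>y\<in>C. pl x y = pl y x" using pm unfolding ab_premodule_def by (elim conjE) assumption
lemma P7: "\<forall>x\<in>C. pl z0 x = x" using pm unfolding ab_premodule_def by (elim conjE) assumption
lemma P8: "\<forall>x\<in>C. \<exists>y\<in>C. pl x y = z0" using pm unfolding ab_premodule_def by (elim conjE) assumption
lemma P9: "\<forall>s. \<forall>x\<in>C. \<forall>y\<in>C. sm s (pl x y) = pl (sm s x) (sm s y)" using pm unfolding ab_premodule_def by (elim conjE) assumption
lemma P10: "\<forall>s t. \<forall>x\<in>C. sm (s + t) x = pl (sm s x) (sm t x)" using pm unfolding ab_premodule_def by (elim conjE) assumption
lemma P11: "\<forall>s t. \<forall>x\<in>C. sm (s * t) x = sm s (sm t x)" using pm unfolding ab_premodule_def by (elim conjE) assumption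
lemma P12: "\<forall>x\<in>C. sm 1 x = x" using pm unfolding ab_premodule_def by (elim conjE) assumption
lemma P13: "\<forall>x\<in>C. \<forall>y\<in>C. aa (pl x y) = pl (aa x) (aa y)" using pm unfolding ab_premodule_def by (elim conjE) assumption
lemma P14: "\<forall>c. \<forall>x\<in>C. aa (sm (fps_const c) x) = sm (fps_const c) (aa x)" using pm unfolding ab_premodule_def by (elim conjE) assumption
lemma P15: "\<forall>x\<in>C. aa (sm fps_X x) = pl (sm fps_X (aa x)) (sm (fps_X^2) x)" using pm unfolding ab_premodule_def by (elim conjE) assumption

lemma zero_closed[simp]: "z0 \<in> C" by (rule P1)
lemma add_closed[simp]: "x \<in> C \<Longrightarrow> y \<in> C \<Longrightarrow> pl x y \<in> C" using P2 by blast
lemma sm_closed[simp]: "x \<in> C \<Longrightarrow> sm s x \<in> C" using P3 by blast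
lemma a_closed[simp]: "x \<in> C \<Longrightarrow> aa x \<in> C" using P4 by blast
lemma add_assoc: "x \<in> C \<Longrightarrow> y \<in> C \<Longrightarrow> z \<in> C \<Longrightarrow> pl (pl x y) z = pl x (pl y z)" using P5 by blast
lemma add_comm: "x \<in> C \<Longrightarrow> y \<in> C \<Longrightarrow> pl x y = pl y x" using P6 by blast
lemma zero_add[simp]: "x \<in> C \<Longrightarrow> pl z0 x = x" using P7 by blast
lemma add_zero[simp]: "x \<in> C \<Longrightarrow> pl x z0 = x" using add_comm zero_add zero_closed by metis
lemma ex_neg: "x \<in> C \<Longrightarrow> \<exists>y\<in>C. pl x y = z0" using P8 by blast
lemma sm_add_right: "x \<in> C \<Longrightarrow> y \<in> C \<Longrightarrow> sm s (pl x y) = pl (sm s x) (sm s y)" using P9 by blast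
lemma sm_add_left: "x \<in> C \<Longrightarrow> sm (s + t) x = pl (sm s x) (sm t x)" using P10 by blast
lemma sm_mult: "x \<in> C \<Longrightarrow> sm (s * t) x = sm s (sm t x)" using P11 by blast
lemma sm_one[simp]: "x \<in> C \<Longrightarrow> sm 1 x = x" using P12 by blast
lemma a_add: "x \<in> C \<Longrightarrow> y \<in> C \<Longrightarrow> aa (pl x y) = pl (aa x) (aa y)" using P13 by blast
lemma a_const: "x \<in> C \<Longrightarrow> aa (sm (fps_const c) x) = sm (fps_const c) (aa x)" using P14 by blast

lemma add_left_commute: "x \<in> C \<Longrightarrow> y \<in> C \<Longrightarrow> z \<in> C \<Longrightarrow> pl x (pl y z) = pl y (pl x z)"
  by (metis add_assoc add_comm)

lemmas add_ac = add_assoc add_comm add_left_commute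

lemma add_left_cancel:
  assumes "x \<in> C" "y \<in> C" "y' \<in> C" "pl x y = pl x y'" shows "y = y'"
proof -
  obtain n where n: "n \<in> C" "pl x n = z0" using ex_neg assms(1) by blast
  have "y = pl (pl n x) y" using n assms by (simp add: add_comm)
  also have "\<dots> = pl (pl n x) y'" using assms n by (simp add: add_assoc)
  also have "\<dots> = y'" using n assms by (simp add: add_comm)
  finally show ?thesis .
qed

lemma sm_zero_left[simp]: "x \<in> C \<Longrightarrow> sm 0 x = z0"
proof -
  assume x: "x \<in> C"
  have "pl (sm 0 x) (sm 0 x) = pl (sm 0 x) z0"
    using sm_add_left[OF x, of 0 0] x by simp
  thus ?thesis using add_left_cancel x by (metis add_zero sm_closed zero_closed)
qed

lemma sm_zero_right[simp]: "sm s z0 = z0"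
proof -
  have "sm s z0 = sm s (sm 0 z0)" by simp
  also have "\<dots> = sm (s * 0) z0" by (simp only: sm_mult zero_closed)
  also have "\<dots> = z0" by simp
  finally show ?thesis .
qed

lemma add_neg[simp]: "x \<in> C \<Longrightarrow> pl x (sm (-1) x) = z0"
proof -
  assume x: "x \<in> C"
  have "pl x (sm (-1) x) = pl (sm 1 x) (sm (-1) x)" using x by simp
  also have "\<dots> = sm (1 + -1) x" using x by (simp only: sm_add_left)
  also have "\<dots> = z0" using x by simp
  finally show ?thesis .
qed

lemma sm_sm[simp]: "x \<in> C \<Longrightarrow> sm s (sm t x) = sm (s * t) x"
  by (simp add: sm_mult)

lemma eq_iff_diff: "x \<in> C \<Longrightarrow> y \<in> C \<Longrightarrow> x = y \<longleftrightarrow> pl x (sm (-1) y) = z0"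
proof
  assume "x \<in> C" "y \<in> C" "pl x (sm (-1) y) = z0"
  hence "pl (pl x (sm (-1) y)) y = y" by simp
  moreover have "pl (pl x (sm (-1) y)) y = x" using \<open>x\<in>C\<close> \<open>y\<in>C\<close>
    by (metis add_assoc add_comm add_neg add_zero sm_closed)
  ultimately show "x = y" by simp
qed simp

lemma a_zero[simp]: "aa z0 = z0"
proof -
  have "pl (aa z0) (aa z0) = pl (aa z0) z0" using a_add[of z0 z0] by simp
  thus ?thesis using add_left_cancel by (metis a_closed add_zero zero_closed)
qed

lemma lincomb_Nil[simp]: "lincomb M [] vs = z0" "lincomb M cs [] = z0"
  by (simp_all add: lincomb_def)
lemma lincomb_Cons[simp]: "lincomb M (c # cs) (v # vs) = pl (sm c v) (lincomb M cs vs)"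
  by (simp add: lincomb_def)

lemma lincomb_closed[simp]: "set vs \<subseteq> C \<Longrightarrow> lincomb M cs vs \<in> C"
proof (induct vs arbitrary: cs)
  case (Cons v vs) thus ?case by (cases cs) auto
qed simp

lemma lincomb_sm: "set vs \<subseteq> C \<Longrightarrow> sm s (lincomb M cs vs) = lincomb M (map ((*) s) cs) vs"
proof (induct vs arbitrary: cs)
  case (Cons v vs) thus ?case by (cases cs) (auto simp: sm_add_right)
qed simp

lemma lincomb_zero: "set vs \<subseteq> C \<Longrightarrow> lincomb M (replicate k 0) vs = z0"
proof (induct vs arbitrary: k)
  case (Cons v vs) thus ?case by (cases k) auto
qed simp

lemma lincomb_append: "length cs1 = length vs1 \<Longrightarrow> set vs1 \<subseteq> C \<Longrightarrow> set vs2 \<subseteq> C \<Longrightarrow>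
  lincomb M (cs1 @ cs2) (vs1 @ vs2) = pl (lincomb M cs1 vs1) (lincomb M cs2 vs2)"
proof (induct vs1 arbitrary: cs1)
  case (Cons v vs) thus ?case by (cases cs1) (auto simp: add_assoc)
qed simp

lemma lincomb_functional:
  assumes add: "\<And>x y. x \<in> C \<Longrightarrow> y \<in> C \<Longrightarrow> \<phi> (pl x y) = \<phi> x + \<phi> y"
    and smul: "\<And>s x. x \<in> C \<Longrightarrow> \<phi> (sm s x) = s * \<phi> x"
    and "set vs \<subseteq> C"
  shows "\<phi> (lincomb M cs vs) = sum_list (map2 (\<lambda>c v. c * \<phi> v) cs vs)"
  using assms(3)
proof (induct vs arbitrary: cs)
  case Nil
  have "\<phi> z0 = \<phi> (sm 0 z0)" by simp
  also have "\<dots> = 0" using smul[of z0 0] by simp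
  finally show ?case by simp
next
  case (Cons v vs) thus ?case
  proof (cases cs)
    case Nil
    have "\<phi> z0 = \<phi> (sm 0 z0)" by simp
    also have "\<dots> = 0" using smul[of z0 0] by simp
    finally show ?thesis using Nil by simp
  qed (auto simp: add smul)
qed

lemma basis_unique:
  assumes "is_basis M vs" "length cs = length vs" "length ds = length vs"
    "lincomb M cs vs = lincomb M ds vs"
  shows "cs = ds"
proof -
  have "lincomb M cs vs \<in> C" using assms(1) unfolding is_basis_def by simp
  then obtain es where "\<forall>e. length e = length vs \<and> lincomb M e vs = lincomb M cs vs \<longrightarrow> e = es"
    using assms(1) unfolding is_basis_def by metis
  thus ?thesis using assms by metis
qed

lemma basis_exists:
  assumes "is_basis M vs" "x \<in> C"
  shows "\<exists>cs. length cs = length vs \<and> lincomb M cs vs = x"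
  using assms unfolding is_basis_def by metis

lemma torsion_free_basis:
  assumes "is_basis M vs" "x \<in> C" "sm s x = z0" "s \<noteq> 0"
  shows "x = z0"
proof -
  have vs: "set vs \<subseteq> C" using assms(1) unfolding is_basis_def by simp
  obtain cs where cs: "length cs = length vs" "lincomb M cs vs = x" using basis_exists assms by blast
  have "lincomb M (map ((*) s) cs) vs = lincomb M (replicate (length vs) 0) vs"
    using lincomb_sm[OF vs, of s cs] cs assms(3) lincomb_zero[OF vs] by simp
  hence "map ((*) s) cs = replicate (length vs) 0"
    using basis_unique[OF assms(1)] cs by simp
  hence "cs = replicate (length vs) 0" using assms(4) cs
    by (simp add: list_eq_iff_nth_eq)
  thus ?thesis using cs lincomb_zero[OF vs] by simp
qed

end

lemma restr_simps[simp]: "ab_carr (restr M K) = K" "ab_add (restr M K) = ab_add M"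
  "ab_smul (restr M K) = ab_smul M" "ab_zero (restr M K) = ab_zero M" "ab_a (restr M K) = ab_a M"
  by (simp_all add: restr_def)

lemma lincomb_restr[simp]: "lincomb (restr M K) = lincomb M"
  by (simp add: lincomb_def fun_eq_iff)

lemma conj_simps[simp]: "ab_carr (conj M) = ab_carr M" "ab_add (conj M) = ab_add M"
  "ab_smul (conj M) = (\<lambda>s x. ab_smul M (fps_reflect s) x)" "ab_zero (conj M) = ab_zero M"
  "ab_a (conj M) = (\<lambda>x. ab_smul M (-1) (ab_a M x))"
  by (simp_all add: conj_def)

lemma E0_a[simp]: "ab_a (E_elem 0) S = fps_X^2 * fps_deriv S"
  by (simp add: E_elem_def)

lemma dual_simps[simp]: "ab_add (dual M) = (\<lambda>\<phi> \<psi> x. \<phi> x + \<psi> x)"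
  "ab_smul (dual M) = (\<lambda>s \<phi> x. s * \<phi> x)" "ab_zero (dual M) = (\<lambda>x. 0)"
  "ab_a (dual M) = (\<lambda>\<phi> x. if x \<in> ab_carr M then fps_X^2 * fps_deriv (\<phi> x) - \<phi> (ab_a M x) else 0)"
  by (simp_all add: dual_def fun_eq_iff)

lemma dual_carr: "\<phi> \<in> ab_carr (dual M) \<longleftrightarrow>
   (\<forall>x\<in>ab_carr M. \<forall>y\<in>ab_carr M. \<phi> (ab_add M x y) = \<phi> x + \<phi> y) \<and>
   (\<forall>s. \<forall>x\<in>ab_carr M. \<phi> (ab_smul M s x) = s * \<phi> x) \<and>
   (\<forall>x. x \<notin> ab_carr M \<longrightarrow> \<phi> x = 0)"
  by (simp add: dual_def)

lemma (in pm) sub_premodule: assumes "is_sub M K" shows "ab_premodule (restr M K)"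
proof -
  have KC: "\<And>x. x \<in> K \<Longrightarrow> x \<in> C" and K0: "z0 \<in> K"
    and Kadd: "\<And>x y. x \<in> K \<Longrightarrow> y \<in> K \<Longrightarrow> pl x y \<in> K"
    and Ksm: "\<And>s x. x \<in> K \<Longrightarrow> sm s x \<in> K" and Ka: "\<And>x. x \<in> K \<Longrightarrow> aa x \<in> K"
    using assms unfolding is_sub_def by auto
  show ?thesis unfolding ab_premodule_def restr_simps
  proof (intro conjI)
    show "\<forall>x\<in>K. \<exists>y\<in>K. pl x y = z0"
    proof
      fix x assume x: "x \<in> K"
      show "\<exists>y\<in>K. pl x y = z0" using x KC Ksm by (intro bexI[of _ "sm (-1) x"]) auto
    qed
    show "z0 \<in> K" by (rule K0)
    show "\<forall>x\<in>K. \<forall>y\<in>K. pl x y \<in> K" using Kadd by blast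
    show "\<forall>s. \<forall>x\<in>K. sm s x \<in> K" using Ksm by blast
    show "\<forall>x\<in>K. aa x \<in> K" using Ka by blast
    show "\<forall>x\<in>K. \<forall>y\<in>K. \<forall>z\<in>K. pl (pl x y) z = pl x (pl y z)" using KC add_assoc by blast
    show "\<forall>x\<in>K. \<forall>y\<in>K. pl x y = pl y x" using KC add_comm by blast
    show "\<forall>x\<in>K. pl z0 x = x" using KC zero_add by blast
    show "\<forall>s. \<forall>x\<in>K. \<forall>y\<in>K. sm s (pl x y) = pl (sm s x) (sm s y)" using KC sm_add_right by blast
    show "\<forall>s t. \<forall>x\<in>K. sm (s + t) x = pl (sm s x) (sm t x)" using KC sm_add_left by blast
    show "\<forall>s t. \<forall>x\<in>K. sm (s * t) x = sm s (sm t x)" using KC sm_mult by blast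
    show "\<forall>x\<in>K. sm 1 x = x" using KC sm_one by blast
    show "\<forall>x\<in>K. \<forall>y\<in>K. aa (pl x y) = pl (aa x) (aa y)" using KC a_add by blast
    show "\<forall>c. \<forall>x\<in>K. aa (sm (fps_const c) x) = sm (fps_const c) (aa x)" using KC a_const by blast
    show "\<forall>x\<in>K. aa (sm fps_X x) = pl (sm fps_X (aa x)) (sm (fps_X\<^sup>2) x)" using KC P15 by blast
  qed
qed

section \<open>quotients\<close>

locale pmq = pm M for M :: "'v abmod" +
  fixes F :: "'v set"
  assumes sub: "is_sub M F"
begin

abbreviation "cs \<equiv> coset M F"
abbreviation "Q \<equiv> quot M F"

lemma F_sub: "f \<in> F \<Longrightarrow> f \<in> C" using sub unfolding is_sub_def by blast
lemma F_zero[simp]: "z0 \<in> F" using sub unfolding is_sub_def by blast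
lemma F_add[simp]: "x \<in> F \<Longrightarrow> y \<in> F \<Longrightarrow> pl x y \<in> F" using sub unfolding is_sub_def by blast
lemma F_sm[simp]: "x \<in> F \<Longrightarrow> sm s x \<in> F" using sub unfolding is_sub_def by blast
lemma F_a[simp]: "x \<in> F \<Longrightarrow> aa x \<in> F" using sub unfolding is_sub_def by blast

lemma mem_coset: "y \<in> cs x \<longleftrightarrow> (\<exists>f\<in>F. y = pl x f)"
  unfolding coset_def by blast

lemma coset_self: "x \<in> C \<Longrightarrow> x \<in> cs x"
  unfolding mem_coset by (metis F_zero add_zero)

lemma coset_subset: "x \<in> C \<Longrightarrow> cs x \<subseteq> C"
  unfolding coset_def using F_sub by auto

lemma coset_shift: assumes "x \<in> C" "f \<in> F" shows "cs (pl x f) = cs x"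
proof
  show "cs (pl x f) \<subseteq> cs x"
    using assms F_sub unfolding coset_def by (auto simp: add_assoc)
next
  show "cs x \<subseteq> cs (pl x f)"
  proof
    fix y assume "y \<in> cs x"
    then obtain g where g: "g \<in> F" "y = pl x g" unfolding mem_coset by blast
    have fC: "f \<in> C" "g \<in> C" using assms g F_sub by auto
    have "y = pl (pl x f) (pl g (sm (-1) f))"
      using g fC assms by (metis add_assoc add_comm add_neg add_zero sm_closed add_closed)
    moreover have "pl g (sm (-1) f) \<in> F" using g assms by simp
    ultimately show "y \<in> cs (pl x f)" unfolding mem_coset by blast
  qed
qed

lemma coset_eq_iff: assumes "x \<in> C" "y \<in> C" shows "cs x = cs y \<longleftrightarrow> pl x (sm (-1) y) \<in> F"
proof
  assume "cs x = cs y"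
  hence "x \<in> cs y" using coset_self assms by blast
  then obtain f where f: "f \<in> F" "x = pl y f" unfolding mem_coset by blast
  have "pl x (sm (-1) y) = f" using f F_sub[OF f(1)] assms
    by (metis add_assoc add_comm add_neg add_zero sm_closed)
  thus "pl x (sm (-1) y) \<in> F" using f by simp
next
  assume d: "pl x (sm (-1) y) \<in> F"
  have "x = pl y (pl x (sm (-1) y))" using assms
    by (metis add_assoc add_comm add_neg add_zero sm_closed)
  hence "cs x = cs (pl y (pl x (sm (-1) y)))" by simp
  also have "\<dots> = cs y" using coset_shift d assms by blast
  finally show "cs x = cs y" .
qed

lemma rep_coset: assumes "x \<in> C" shows "\<exists>f\<in>F. (SOME u. u \<in> cs x) = pl x f"
proof -
  have "(SOME u. u \<in> cs x) \<in> cs x" using coset_self[OF assms] by (rule someI)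
  thus ?thesis unfolding mem_coset by blast
qed

lemma q_carr: "ab_carr Q = cs ` C" by (simp add: quot_def)
lemma q_zero: "ab_zero Q = cs z0" by (simp add: quot_def)

lemma q_add: assumes "x \<in> C" "y \<in> C" shows "ab_add Q (cs x) (cs y) = cs (pl x y)"
proof -
  obtain f g where fg: "f \<in> F" "g \<in> F" "(SOME u. u \<in> cs x) = pl x f" "(SOME u. u \<in> cs y) = pl y g"
    using rep_coset assms by metis
  have C: "f \<in> C" "g \<in> C" using fg F_sub by auto
  have "pl (pl x f) (pl y g) = pl (pl x y) (pl f g)" using C assms by (metis add_assoc add_comm add_closed)
  thus ?thesis using fg assms C by (simp add: quot_def coset_shift)
qed

lemma q_sm: assumes "x \<in> C" shows "ab_smul Q s (cs x) = cs (sm s x)"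
proof -
  obtain f where f: "f \<in> F" "(SOME u. u \<in> cs x) = pl x f" using rep_coset assms by metis
  thus ?thesis using assms F_sub[OF f(1)] by (simp add: quot_def sm_add_right coset_shift)
qed

lemma q_a: assumes "x \<in> C" shows "ab_a Q (cs x) = cs (aa x)"
proof -
  obtain f where f: "f \<in> F" "(SOME u. u \<in> cs x) = pl x f" using rep_coset assms by metis
  thus ?thesis using assms F_sub[OF f(1)] by (simp add: quot_def a_add coset_shift)
qed

lemma q_premodule: "ab_premodule Q"
proof -
  have neg: "\<forall>X\<in>ab_carr Q. \<exists>Y\<in>ab_carr Q. ab_add Q X Y = ab_zero Q"
    unfolding q_carr q_zero
  proof
    fix X assume "X \<in> cs ` C"
    then obtain x where x: "x \<in> C" "X = cs x" by blast
    then obtain y where "y \<in> C" "pl x y = z0" using ex_neg by blast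
    thus "\<exists>Y\<in>cs ` C. ab_add Q X Y = cs z0"
      by (intro bexI[of _ "cs y"]) (use x q_add[of x y] in auto)
  qed
  show ?thesis unfolding ab_premodule_def
  proof (intro conjI)
    show "\<forall>x\<in>ab_carr Q. \<exists>y\<in>ab_carr Q. ab_add Q x y = ab_zero Q" by (rule neg)
    show "ab_zero Q \<in> ab_carr Q" by (simp add: q_zero q_carr)
    show "\<forall>x\<in>ab_carr Q. \<forall>y\<in>ab_carr Q. ab_add Q x y \<in> ab_carr Q" by (auto simp: q_carr q_add)
    show "\<forall>s. \<forall>x\<in>ab_carr Q. ab_smul Q s x \<in> ab_carr Q" by (auto simp: q_carr q_sm)
    show "\<forall>x\<in>ab_carr Q. ab_a Q x \<in> ab_carr Q" by (auto simp: q_carr q_a)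
    show "\<forall>x\<in>ab_carr Q. \<forall>y\<in>ab_carr Q. \<forall>z\<in>ab_carr Q. ab_add Q (ab_add Q x y) z = ab_add Q x (ab_add Q y z)"
      by (auto simp: q_carr q_add add_assoc)
    show "\<forall>x\<in>ab_carr Q. \<forall>y\<in>ab_carr Q. ab_add Q x y = ab_add Q y x"
      by (clarsimp simp: q_carr q_add) (metis add_comm)
    show "\<forall>x\<in>ab_carr Q. ab_add Q (ab_zero Q) x = x" by (auto simp: q_carr q_add q_zero)
    show "\<forall>s. \<forall>x\<in>ab_carr Q. \<forall>y\<in>ab_carr Q. ab_smul Q s (ab_add Q x y) = ab_add Q (ab_smul Q s x) (ab_smul Q s y)"
      by (auto simp: q_carr q_add q_sm sm_add_right)
    show "\<forall>s t. \<forall>x\<in>ab_carr Q. ab_smul Q (s + t) x = ab_add Q (ab_smul Q s x) (ab_smul Q t x)"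
      by (auto simp: q_carr q_add q_sm sm_add_left)
    show "\<forall>s t. \<forall>x\<in>ab_carr Q. ab_smul Q (s * t) x = ab_smul Q s (ab_smul Q t x)"
      by (auto simp: q_carr q_sm)
    show "\<forall>x\<in>ab_carr Q. ab_smul Q 1 x = x" by (auto simp: q_carr q_sm)
    show "\<forall>x\<in>ab_carr Q. \<forall>y\<in>ab_carr Q. ab_a Q (ab_add Q x y) = ab_add Q (ab_a Q x) (ab_a Q y)"
      by (auto simp: q_carr q_add q_a a_add)
    show "\<forall>c. \<forall>x\<in>ab_carr Q. ab_a Q (ab_smul Q (fps_const c) x) = ab_smul Q (fps_const c) (ab_a Q x)"
      by (auto simp: q_carr q_sm q_a a_const)
    show "\<forall>x\<in>ab_carr Q. ab_a Q (ab_smul Q fps_X x) = ab_add Q (ab_smul Q fps_X (ab_a Q x)) (ab_smul Q (fps_X\<^sup>2) x)"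
      using P15 by (auto simp: q_carr q_add q_sm q_a)
  qed
qed

lemma lincomb_quot: "set vs \<subseteq> C \<Longrightarrow> lincomb Q cs' (map cs vs) = cs (lincomb M cs' vs)"
proof (induct vs arbitrary: cs')
  case Nil thus ?case by (simp add: q_zero)
next
  case (Cons v vs) thus ?case
    by (cases cs') (auto simp: q_zero q_add q_sm)
qed


lemma quot_basis_complement:
  assumes KC: "K \<subseteq> C" and Kb: "is_basis (restr M K) ks"
    and K0: "z0 \<in> K" and Kadd: "\<forall>x\<in>K. \<forall>y\<in>K. pl x y \<in> K" and Ksm: "\<forall>s. \<forall>x\<in>K. sm s x \<in> K"
    and dec: "\<forall>v\<in>C. \<exists>k\<in>K. cs v = cs k" and inter: "\<forall>k\<in>K. k \<in> F \<longrightarrow> k = z0"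
  shows "is_basis Q (map cs ks)"
proof -
  have ksK: "set ks \<subseteq> K" using Kb unfolding is_basis_def by simp
  hence ksC: "set ks \<subseteq> C" using KC by blast
  have linK: "lincomb M d ks \<in> K" for d
    using ksK
  proof (induct ks arbitrary: d)
    case (Cons k ks) thus ?case using Kadd Ksm K0 by (cases d) auto
  qed (simp add: K0)
  have uniqK: "\<And>x. x \<in> K \<Longrightarrow> \<exists>!d. length d = length ks \<and> lincomb M d ks = x"
    using Kb unfolding is_basis_def by simp
  show ?thesis unfolding is_basis_def
  proof (intro conjI ballI)
    show "set (map cs ks) \<subseteq> ab_carr Q" using ksC by (auto simp: q_carr)
  next
    fix X assume "X \<in> ab_carr Q"
    then obtain v where v: "v \<in> C" "X = cs v" by (auto simp: q_carr)
    then obtain k where k: "k \<in> K" "cs v = cs k" using dec by blast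
    obtain d where d: "length d = length ks" "lincomb M d ks = k" using uniqK[OF k(1)] by blast
    show "\<exists>!d. length d = length (map cs ks) \<and> lincomb Q d (map cs ks) = X"
    proof (rule ex1I[of _ d])
      show "length d = length (map cs ks) \<and> lincomb Q d (map cs ks) = X"
        using d k v lincomb_quot[OF ksC] by simp
    next
      fix e assume e: "length e = length (map cs ks) \<and> lincomb Q e (map cs ks) = X"
      hence "cs (lincomb M e ks) = cs (lincomb M d ks)" using d k v lincomb_quot[OF ksC] by simp
      hence diffF: "pl (lincomb M e ks) (sm (-1) (lincomb M d ks)) \<in> F"
        using coset_eq_iff ksC by simp
      have inK: "pl (lincomb M e ks) (sm (-1) (lincomb M d ks)) \<in> K"
        using Kadd Ksm linK[of e] linK[of d] by simp
      have "pl (lincomb M e ks) (sm (-1) (lincomb M d ks)) = z0" using inter inK diffF by simp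
      moreover have "lincomb M e ks \<in> C" "lincomb M d ks \<in> C" using ksC by auto
      ultimately have eq: "lincomb M e ks = lincomb M d ks" using eq_iff_diff by blast
      have le: "length e = length ks" using e by simp
      show "e = d"
      proof -
        from uniqK[OF linK[of d]] obtain d0 where
          "\<And>y. length y = length ks \<and> lincomb M y ks = lincomb M d ks \<Longrightarrow> y = d0"
          by (metis (no_types, lifting))
        hence "e = d0" "d = d0" using eq le d(1) by auto
        thus ?thesis by simp
      qed
    qed
  qed
qed

end




context pm begin

lemma add_swap: "a \<in> C \<Longrightarrow> b \<in> C \<Longrightarrow> c \<in> C \<Longrightarrow> d \<in> C \<Longrightarrow>
   pl (pl a b) (pl c d) = pl (pl a c) (pl b d)"
  by (metis add_assoc add_comm add_closed)

lemma sum_map2_nth0: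
  assumes "\<forall>v\<in>set vs. fps_nth (\<pi> v) 0 = 0"
  shows "fps_nth (sum_list (map2 (\<lambda>c v. c * \<pi> v) cs vs)) 0 = (0::complex)"
  using assms
proof (induct vs arbitrary: cs)
  case (Cons v vs) thus ?case by (cases cs) (auto simp: fps_add_nth)
qed simp

lemma sum_map2_scale:
  fixes \<pi> :: "'v \<Rightarrow> complex fps"
  shows "sum_list (map2 (\<lambda>x y. - (x * (\<pi> y * r))) ds vs) = - (sum_list (map2 (\<lambda>x y. x * \<pi> y) ds vs) * r)"
proof (induct vs arbitrary: ds)
  case (Cons v vs) thus ?case by (cases ds) (auto simp: algebra_simps)
qed simp

lemma lincomb_map_shift:
  assumes "set vs \<subseteq> C" "e \<in> C"
  shows "lincomb M ds (map (\<lambda>v. pl v (sm (\<rho> v) e)) vs) =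
    pl (lincomb M ds vs) (sm (sum_list (map2 (\<lambda>d v. d * \<rho> v) ds vs)) e)"
  using assms(1)
proof (induct vs arbitrary: ds)
  case Nil thus ?case using assms by simp
next
  case (Cons v vs)
  show ?case
  proof (cases ds)
    case Nil thus ?thesis using assms by simp
  next
    case (Cons d ds')
    have v: "v \<in> C" "set vs \<subseteq> C" using Cons.prems by auto
    have "lincomb M ds (map (\<lambda>v. pl v (sm (\<rho> v) e)) (v # vs)) =
      pl (sm d (pl v (sm (\<rho> v) e))) (pl (lincomb M ds' vs) (sm (sum_list (map2 (\<lambda>d v. d * \<rho> v) ds' vs)) e))"
      using Cons Cons.hyps[OF v(2)] by simp
    also have "\<dots> = pl (pl (sm d v) (sm (d * \<rho> v) e)) (pl (lincomb M ds' vs) (sm (sum_list (map2 (\<lambda>d v. d * \<rho> v) ds' vs)) e))"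
      using v assms by (simp add: sm_add_right)
    also have "\<dots> = pl (pl (sm d v) (lincomb M ds' vs)) (pl (sm (d * \<rho> v) e) (sm (sum_list (map2 (\<lambda>d v. d * \<rho> v) ds' vs)) e))"
      using v assms by (simp add: add_swap)
    also have "\<dots> = pl (pl (sm d v) (lincomb M ds' vs)) (sm (d * \<rho> v + sum_list (map2 (\<lambda>d v. d * \<rho> v) ds' vs)) e)"
      using assms by (simp add: sm_add_left)
    finally show ?thesis using Cons by simp
  qed
qed

lemma elim_basis:
  assumes b: "is_basis M es"
    and padd: "\<And>x y. x \<in> C \<Longrightarrow> y \<in> C \<Longrightarrow> \<pi> (pl x y) = \<pi> x + \<pi> y"
    and psm: "\<And>s x. x \<in> C \<Longrightarrow> \<pi> (sm s x) = s * \<pi> x"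
    and u: "u \<in> C" "\<pi> u = 1"
  shows "has_rank (restr M {v\<in>C. \<pi> v = 0}) (length es - 1)"
proof -
  define K where "K = {v\<in>C. \<pi> v = 0}"
  have esC: "set es \<subseteq> C" using b unfolding is_basis_def by simp
  have lf: "\<And>cs vs. set vs \<subseteq> C \<Longrightarrow> \<pi> (lincomb M cs vs) = sum_list (map2 (\<lambda>c v. c * \<pi> v) cs vs)"
    by (rule lincomb_functional) (auto simp: padd psm)
  obtain cu where cu: "length cu = length es" "lincomb M cu es = u" using basis_exists[OF b u(1)] by blast
  have "\<exists>e\<in>set es. fps_nth (\<pi> e) 0 \<noteq> 0"
  proof (rule ccontr)
    assume "\<not> ?thesis"
    hence "fps_nth (\<pi> u) 0 = 0" using sum_map2_nth0[of es \<pi> cu] lf[OF esC, of cu] cu by simp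
    thus False using u by simp
  qed
  then obtain e es1 es2 where e: "es = es1 @ e # es2" "fps_nth (\<pi> e) 0 \<noteq> 0"
    by (metis split_list)
  have eC: "e \<in> C" and es12: "set es1 \<subseteq> C" "set es2 \<subseteq> C" using esC e by auto
  define r where "r = inverse (\<pi> e)"
  have r: "\<pi> e * r = 1" unfolding r_def using e(2) by (rule inverse_mult_eq_1')
  define \<rho> where "\<rho> v = - (\<pi> v * r)" for v
  define g where "g v = pl v (sm (\<rho> v) e)" for v
  define ks where "ks = map g (es1 @ es2)"
  have gK: "g v \<in> K" if "v \<in> C" for v
  proof -
    have "\<pi> (g v) = \<pi> v + \<rho> v * \<pi> e" unfolding g_def using that eC by (simp add: padd psm)
    also have "\<dots> = \<pi> v - \<pi> v * (\<pi> e * r)" unfolding \<rho>_def by (simp add: algebra_simps)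
    finally show ?thesis using that eC unfolding K_def g_def by (simp add: r)
  qed
  have ksK: "set ks \<subseteq> K" unfolding ks_def using es12 gK by auto
  have lks: "lincomb M ds ks = pl (lincomb M ds (es1 @ es2)) (sm (- (sum_list (map2 (\<lambda>c v. c * \<pi> v) ds (es1 @ es2))) * r) e)" for ds
    unfolding ks_def g_def using lincomb_map_shift[of "es1 @ es2" e ds \<rho>] es12 eC
    by (simp add: \<rho>_def sum_map2_scale)
  have split_lc: "lincomb M ds ks = lincomb M (take (length es1) ds @ (- (sum_list (map2 (\<lambda>c v. c * \<pi> v) ds (es1 @ es2))) * r) # drop (length es1) ds) es"
    if "length ds = length es1 + length es2" for ds
  proof -
    let ?R = "- (sum_list (map2 (\<lambda>c v. c * \<pi> v) ds (es1 @ es2))) * r"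
    have ds: "ds = take (length es1) ds @ drop (length es1) ds" by simp
    have "lincomb M ds (es1 @ es2) = pl (lincomb M (take (length es1) ds) es1) (lincomb M (drop (length es1) ds) es2)"
      using lincomb_append[of "take (length es1) ds" es1 es2 "drop (length es1) ds"] that es12 by simp
    hence "lincomb M ds ks = pl (pl (lincomb M (take (length es1) ds) es1) (lincomb M (drop (length es1) ds) es2)) (sm ?R e)"
      using lks by simp
    also have "\<dots> = pl (lincomb M (take (length es1) ds) es1) (pl (sm ?R e) (lincomb M (drop (length es1) ds) es2))"
      using es12 eC by (metis add_assoc add_comm lincomb_closed sm_closed)
    also have "\<dots> = lincomb M (take (length es1) ds @ ?R # drop (length es1) ds) es"
      using lincomb_append[of "take (length es1) ds" es1 "e # es2" "?R # drop (length es1) ds"] that es12 eC e(1)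
      by simp
    finally show ?thesis .
  qed
  have basis: "is_basis (restr M K) ks"
    unfolding is_basis_def
  proof (intro conjI ballI)
    show "set ks \<subseteq> ab_carr (restr M K)" using ksK by simp
  next
    fix v assume "v \<in> ab_carr (restr M K)"
    hence v: "v \<in> C" "\<pi> v = 0" unfolding K_def by auto
    obtain cv where cv: "length cv = length es" "lincomb M cv es = v" using basis_exists[OF b v(1)] by blast
    define c1 where "c1 = take (length es1) cv"
    define c where "c = cv ! length es1"
    define c2 where "c2 = drop (Suc (length es1)) cv"
    have cv_split: "cv = c1 @ c # c2" using cv(1) e(1) unfolding c1_def c_def c2_def
      by (simp add: id_take_nth_drop)
    have len: "length c1 = length es1" "length c2 = length es2" using cv(1) e(1) cv_split
      unfolding c1_def c2_def by auto
    have "0 = \<pi> v" using v by simp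
    also have "\<dots> = sum_list (map2 (\<lambda>c v. c * \<pi> v) cv es)" using lf[OF esC, of cv] cv(2) by simp
    also have "\<dots> = sum_list (map2 (\<lambda>c v. c * \<pi> v) c1 es1) + c * \<pi> e + sum_list (map2 (\<lambda>c v. c * \<pi> v) c2 es2)"
      using cv_split e(1) len by (simp add: zip_append)
    finally have h: "c * \<pi> e = - (sum_list (map2 (\<lambda>c v. c * \<pi> v) c1 es1) + sum_list (map2 (\<lambda>c v. c * \<pi> v) c2 es2))"
      by (simp add: eq_neg_iff_add_eq_0 algebra_simps)
    have cval: "c = - (sum_list (map2 (\<lambda>c v. c * \<pi> v) (c1 @ c2) (es1 @ es2))) * r"
    proof -
      have "c = c * (\<pi> e * r)" by (simp add: r)
      also have "\<dots> = (c * \<pi> e) * r" by (simp add: algebra_simps)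
      finally show ?thesis using h len by (simp add: zip_append)
    qed
    show "\<exists>!ds. length ds = length ks \<and> lincomb (restr M K) ds ks = v"
    proof (rule ex1I[of _ "c1 @ c2"])
      have "lincomb M (c1 @ c2) ks = lincomb M cv es"
        using split_lc[of "c1 @ c2"] len cval cv_split by simp
      thus "length (c1 @ c2) = length ks \<and> lincomb (restr M K) (c1 @ c2) ks = v"
        using len cv ks_def by simp
    next
      fix ds assume ds: "length ds = length ks \<and> lincomb (restr M K) ds ks = v"
      have lds: "length ds = length es1 + length es2" using ds ks_def by simp
      have "lincomb M (take (length es1) ds @ (- (sum_list (map2 (\<lambda>c v. c * \<pi> v) ds (es1 @ es2))) * r) # drop (length es1) ds) es
          = lincomb M cv es" using split_lc[OF lds] ds cv by simp
      hence "take (length es1) ds @ (- (sum_list (map2 (\<lambda>c v. c * \<pi> v) ds (es1 @ es2))) * r) # drop (length es1) ds = cv"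
        using basis_unique[OF b] cv lds e(1) by simp
      hence "take (length es1) ds = c1" "drop (length es1) ds = c2"
        using cv_split lds len by (simp_all add: append_eq_append_conv)
      thus "ds = c1 @ c2" by (metis append_take_drop_id)
    qed
  qed
  have "length ks = length es - 1" unfolding ks_def using e(1) by simp
  thus ?thesis using basis unfolding has_rank_def K_def by blast
qed

end




lemma ode_coeff:
  fixes S :: "complex fps"
  assumes "fps_X^2 * fps_deriv S = fps_const c * fps_X * S"
  shows "(of_nat i - c) * fps_nth S i = 0"
proof -
  have "fps_nth (fps_X^2 * fps_deriv S) (Suc i) = fps_nth (fps_const c * fps_X * S) (Suc i)"
    using assms by simp
  moreover have "fps_nth (fps_X^2 * fps_deriv S) (Suc i) = of_nat i * fps_nth S i"
    by (cases i) (simp_all add: fps_X_power_mult_nth)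
  moreover have "fps_nth (fps_const c * fps_X * S) (Suc i) = c * fps_nth S i"
    by (simp add: mult.assoc)
  ultimately show ?thesis by (simp add: left_diff_distrib)
qed

lemma ode_single:
  fixes S :: "complex fps"
  assumes "fps_X^2 * fps_deriv S = fps_const (of_nat k) * fps_X * S"
  shows "S = fps_const (fps_nth S k) * fps_X^k"
proof (rule fps_ext)
  fix i
  have "(of_nat i - of_nat k) * fps_nth S i = 0" using ode_coeff[OF assms] by simp
  thus "fps_nth S i = fps_nth (fps_const (fps_nth S k) * fps_X^k) i"
    by (cases "i = k") auto
qed

lemma ode_nat:
  fixes S :: "complex fps"
  assumes "fps_X^2 * fps_deriv S = fps_const c * fps_X * S" "S \<noteq> 0"
  shows "\<exists>k. c = of_nat k \<and> S = fps_const (fps_nth S k) * fps_X^k \<and> fps_nth S k \<noteq> 0"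
proof -
  obtain i where i: "fps_nth S i \<noteq> 0" using assms(2) by (metis fps_nonzero_nth)
  hence c: "c = of_nat i" using ode_coeff[OF assms(1), of i] by simp
  show ?thesis using ode_single[of S i] assms(1) c i by auto
qed

locale herm = pm E for E :: "'v abmod" +
  fixes H :: "'v \<Rightarrow> 'v \<Rightarrow> complex fps"
  assumes hf: "herm_form E H" and nd: "herm_nondeg E H"
begin

lemma HL_add: "v \<in> C \<Longrightarrow> v' \<in> C \<Longrightarrow> w \<in> C \<Longrightarrow> H (pl v v') w = H v w + H v' w"
  using hf unfolding herm_form_def by blast
lemma HR_add: "v \<in> C \<Longrightarrow> w \<in> C \<Longrightarrow> w' \<in> C \<Longrightarrow> H v (pl w w') = H v w + H v w'"
  using hf unfolding herm_form_def conj_simps by blast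
lemma HL_sm: "v \<in> C \<Longrightarrow> w \<in> C \<Longrightarrow> H (sm s v) w = s * H v w"
  using hf unfolding herm_form_def by blast
lemma HR_sm: "v \<in> C \<Longrightarrow> w \<in> C \<Longrightarrow> H v (sm s w) = fps_reflect s * H v w"
proof -
  assume vw: "v \<in> C" "w \<in> C"
  have "\<forall>t. H v (sm (fps_reflect t) w) = t * H v w"
    using hf vw unfolding herm_form_def conj_simps by blast
  from this[rule_format, of "fps_reflect s"] show ?thesis by simp
qed
lemma Hsym: "v \<in> C \<Longrightarrow> w \<in> C \<Longrightarrow> H w v = fps_reflect (H v w)"
  using hf unfolding herm_form_def by blast
lemma Ha0: "v \<in> C \<Longrightarrow> w \<in> C \<Longrightarrow> fps_X^2 * fps_deriv (H v w) = H (aa v) w + H v (sm (-1) (aa w))"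
  using hf unfolding herm_form_def conj_simps E0_a by blast
lemma Ha: "v \<in> C \<Longrightarrow> w \<in> C \<Longrightarrow> H v (aa w) = H (aa v) w - fps_X^2 * fps_deriv (H v w)"
  using Ha0[of v w] HR_sm[of v "aa w" "-1"] by simp
lemma HL_zero[simp]: "w \<in> C \<Longrightarrow> H z0 w = 0"
  using HL_sm[of z0 w 0] by simp
lemma HR_zero[simp]: "v \<in> C \<Longrightarrow> H v z0 = 0"
  using HR_sm[of v z0 0] by simp

definition hmap :: "'v \<Rightarrow> 'v \<Rightarrow> complex fps" where
  "hmap y = (\<lambda>x. if x \<in> C then H x y else 0)"

lemma hmap_iso: "ab_iso_map E (adjoint E) hmap"
  using nd unfolding herm_nondeg_def hmap_def by simp

lemma h_inj: assumes "x \<in> C" "y \<in> C" "\<And>u. u \<in> C \<Longrightarrow> H u x = H u y" shows "x = y"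
proof -
  have "inj_on hmap C" using hmap_iso unfolding ab_iso_map_def bij_betw_def by simp
  moreover have "hmap x = hmap y" unfolding hmap_def using assms(3) by auto
  ultimately show ?thesis using assms(1,2) by (meson inj_onD)
qed

lemma h_surj: assumes "\<phi> \<in> ab_carr (dual E)" shows "\<exists>y\<in>C. \<forall>u\<in>C. \<phi> u = H u y"
proof -
  have "hmap ` C = ab_carr (adjoint E)" using hmap_iso unfolding ab_iso_map_def bij_betw_def by simp
  moreover have "ab_carr (adjoint E) = ab_carr (dual E)" by (simp add: adjoint_def)
  ultimately obtain y where "y \<in> C" "\<phi> = hmap y" using assms by auto
  thus ?thesis unfolding hmap_def by auto
qed

lemma h_surj': assumes "\<And>x y. x \<in> C \<Longrightarrow> y \<in> C \<Longrightarrow> \<phi> (pl x y) = \<phi> x + \<phi> y"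
  "\<And>s x. x \<in> C \<Longrightarrow> \<phi> (sm s x) = s * \<phi> x"
  shows "\<exists>y\<in>C. \<forall>u\<in>C. \<phi> u = H u y"
proof -
  let ?\<psi> = "\<lambda>x. if x \<in> C then \<phi> x else 0"
  have "?\<psi> \<in> ab_carr (dual E)" unfolding dual_carr using assms by auto
  from h_surj[OF this] show ?thesis by auto
qed

lemma a_sm: assumes v: "v \<in> C"
  shows "aa (sm s v) = pl (sm s (aa v)) (sm (fps_X^2 * fps_deriv s) v)"
proof (rule h_inj)
  show "aa (sm s v) \<in> C" "pl (sm s (aa v)) (sm (fps_X^2 * fps_deriv s) v) \<in> C" using v by auto
  fix u assume u: "u \<in> C"
  have "H u (aa (sm s v)) = H (aa u) (sm s v) - fps_X^2 * fps_deriv (H u (sm s v))"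
    using u v by (simp add: Ha)
  also have "\<dots> = fps_reflect s * H (aa u) v - fps_X^2 * fps_deriv (fps_reflect s * H u v)"
    using u v by (simp add: HR_sm)
  also have "\<dots> = fps_reflect s * (H (aa u) v - fps_X^2 * fps_deriv (H u v))
       + fps_X^2 * (- fps_deriv (fps_reflect s)) * H u v"
    by (simp add: fps_deriv_mult algebra_simps)
  also have "\<dots> = H u (pl (sm s (aa v)) (sm (fps_X^2 * fps_deriv s) v))"
    using u v by (simp add: HR_add HR_sm Ha reflect_deriv)
  finally show "H u (aa (sm s v)) = H u (pl (sm s (aa v)) (sm (fps_X^2 * fps_deriv s) v))" .
qed

lemma tf: assumes "v \<in> C" "sm s v = z0" "s \<noteq> 0" shows "v = z0"
proof (rule h_inj)
  fix u assume u: "u \<in> C"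
  have "fps_reflect s * H u v = 0" using HR_sm[OF u assms(1), of s] assms(2) u by simp
  thus "H u v = H u z0" using assms(3) u by simp
qed (use assms in auto)

end




lemma E_elem_simps[simp]: "ab_carr (E_elem f) = UNIV" "ab_smul (E_elem f) = (*)"
  "ab_a (E_elem f) S = fps_const f * fps_X * S + fps_X^2 * fps_deriv S"
  by (simp_all add: E_elem_def)

lemma (in pm) elem_gen:
  assumes sub: "is_sub M F" and iso: "ab_isomorphic (restr M F) (E_elem f)"
  shows "\<exists>x\<in>F. F = {sm s x | s. True} \<and> aa x = sm (fps_const f * fps_X) x \<and> x \<noteq> z0"
proof -
  obtain h where h: "ab_iso_map (restr M F) (E_elem f) h" using iso unfolding ab_isomorphic_def by blast
  have hom: "ab_hom (restr M F) (E_elem f) h" and bij: "bij_betw h F UNIV"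
    using h unfolding ab_iso_map_def by auto
  have hsm: "\<And>s v. v \<in> F \<Longrightarrow> h (sm s v) = s * h v" using hom unfolding ab_hom_def by simp
  have ha: "\<And>v. v \<in> F \<Longrightarrow> h (aa v) = fps_const f * fps_X * h v + fps_X^2 * fps_deriv (h v)"
    using hom unfolding ab_hom_def by simp
  have inj: "inj_on h F" using bij by (simp add: bij_betw_def)
  have FC: "F \<subseteq> C" and Fsm: "\<And>s v. v \<in> F \<Longrightarrow> sm s v \<in> F" and Fa: "\<And>v. v \<in> F \<Longrightarrow> aa v \<in> F"
    using sub unfolding is_sub_def by auto
  obtain x where x: "x \<in> F" "h x = 1" using bij by (metis UNIV_I bij_betw_iff_bijections)
  have eqF: "F = {sm s x | s. True}"
  proof
    show "F \<subseteq> {sm s x | s. True}"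
    proof
      fix v assume v: "v \<in> F"
      have "h (sm (h v) x) = h v" using hsm[OF x(1)] x(2) by simp
      hence "sm (h v) x = v" using inj v Fsm[OF x(1)] by (meson inj_onD)
      hence "v = sm (h v) x" by simp
      thus "v \<in> {sm s x | s. True}" by blast
    qed
  qed (use Fsm x in auto)
  have "h (aa x) = h (sm (fps_const f * fps_X) x)" using ha[OF x(1)] hsm[OF x(1)] x(2) by simp
  hence "aa x = sm (fps_const f * fps_X) x" using inj Fa[OF x(1)] Fsm[OF x(1)] by (meson inj_onD)
  moreover have "x \<noteq> z0"
  proof
    assume "x = z0"
    hence "h x = h (sm 0 x)" using FC x(1) by auto
    thus False using hsm[OF x(1), of 0] x(2) by simp
  qed
  ultimately show ?thesis using x eqF by blast
qed

lemma subdegree_reflect[simp]: "subdegree (fps_reflect S) = subdegree (S :: complex fps)"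
proof (cases "S = 0")
  case False
  show ?thesis
  proof (rule subdegreeI)
    show "fps_nth (fps_reflect S) (subdegree S) \<noteq> 0" using False by simp
    show "\<And>i. i < subdegree S \<Longrightarrow> fps_nth (fps_reflect S) i = 0" by auto
  qed
qed simp

lemma X2_deriv_Xpow: "fps_X^2 * fps_deriv (fps_X ^ m :: complex fps) = of_nat m * fps_X * fps_X^m"
proof (induct m)
  case (Suc m)
  have "fps_X^2 * fps_deriv (fps_X ^ Suc m :: complex fps) = fps_X^2 * (fps_X^m + fps_X * fps_deriv (fps_X^m))"
    by (simp add: fps_deriv_mult)
  also have "\<dots> = fps_X * fps_X^Suc m + fps_X * (fps_X^2 * fps_deriv (fps_X^m))"
    by (simp add: algebra_simps power2_eq_square)
  also have "\<dots> = of_nat (Suc m) * fps_X * fps_X^Suc m" using Suc by (simp add: algebra_simps)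
  finally show ?case .
qed simp

context herm begin

lemma param_nat:
  assumes x: "x \<in> C" "aa x = sm (fps_const f * fps_X) x" and nz: "H x x \<noteq> 0"
  shows "\<exists>p. f = of_nat p \<and> H x x = fps_const (fps_nth (H x x) (2*p)) * fps_X^(2*p) \<and> fps_nth (H x x) (2*p) \<noteq> 0"
proof -
  have "fps_X^2 * fps_deriv (H x x) = H (aa x) x - H x (aa x)" using Ha[OF x(1) x(1)] by simp
  also have "\<dots> = fps_const (f + f) * fps_X * H x x"
  proof -
    have c2: "fps_const (f * 2) = fps_const f * 2" by (metis fps_const_add mult_2_right)
    show ?thesis using x c2 by (simp add: HL_sm HR_sm algebra_simps)
  qed
  finally obtain k where k: "f + f = of_nat k" "H x x = fps_const (fps_nth (H x x) k) * fps_X^k"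
    "fps_nth (H x x) k \<noteq> 0" using ode_nat nz by blast
  have "H x x = fps_reflect (H x x)" using Hsym[OF x(1) x(1)] .
  hence "fps_nth (H x x) k = (-1)^k * fps_nth (H x x) k" by (metis reflect_nth)
  hence "(-1::complex)^k = 1" using k(3) by simp
  hence "even k" by (metis neg_one_odd_power one_neq_neg_one)
  then obtain p where "k = 2*p" by blast
  moreover have "f = of_nat p" using k(1) \<open>k = 2*p\<close> by (simp add: field_simps)
  ultimately show ?thesis using k by (intro exI[of _ p]) auto
qed

lemma cross_form:
  assumes x: "x \<in> C" "aa x = sm (fps_const (of_nat p) * fps_X) x"
    and y: "y \<in> C" "aa y = sm (fps_const (of_nat q) * fps_X) y"
  shows "H x y = fps_const (fps_nth (H x y) (p+q)) * fps_X^(p+q)"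
proof -
  have "fps_X^2 * fps_deriv (H x y) = H (aa x) y - H x (aa y)" using Ha[OF x(1) y(1)] by simp
  also have "\<dots> = fps_const (of_nat (p+q)) * fps_X * H x y" using x y by (simp add: HL_sm HR_sm algebra_simps flip: fps_const_add)
  finally show ?thesis by (rule ode_single)
qed

end




lemma quad_root:
  fixes \<alpha> \<beta> \<gamma> :: complex
  assumes "\<beta> \<noteq> 0"
  shows "\<exists>t. \<beta> * t * t + 2 * \<gamma> * t + \<alpha> = 0"
proof -
  define s where "s = csqrt (4 * \<gamma> * \<gamma> - 4 * \<beta> * \<alpha>)"
  have s2: "s * s = 4 * \<gamma> * \<gamma> - 4 * \<beta> * \<alpha>" unfolding s_def by (metis power2_csqrt power2_eq_square)
  define t where "t = (- 2 * \<gamma> + s) / (2 * \<beta>)"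
  have "\<beta> * t * t + 2 * \<gamma> * t + \<alpha> = ((s * s) - 4 * \<gamma> * \<gamma> + 4 * \<beta> * \<alpha>) / (4 * \<beta>)"
    unfolding t_def using assms by (simp add: field_simps)
  also have "\<dots> = 0" using s2 by simp
  finally show ?thesis by blast
qed

lemma neg_X_power: "(- fps_X :: complex fps)^n = fps_const ((-1)^n) * fps_X^n"
  by (induct n) (simp_all add: algebra_simps flip: fps_const_neg)

context herm begin

lemma iso_vec:
  assumes x: "x \<in> C" "aa x = sm (fps_const (of_nat p) * fps_X) x"
    and y: "y \<in> C" "aa y = sm (fps_const (of_nat (p+k)) * fps_X) y"
    and hx: "H x x = fps_const \<alpha> * fps_X^(2*p)" "\<alpha> \<noteq> 0"
    and hy: "H y y = fps_const \<beta> * fps_X^(2*(p+k))" "\<beta> \<noteq> 0"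
    and NZ: "\<And>t. t \<noteq> 0 \<Longrightarrow> pl (sm (fps_X^k) x) (sm (fps_const t) y) \<noteq> z0"
  shows "\<exists>z\<in>C. z \<noteq> z0 \<and> H z z = 0 \<and> (\<exists>\<mu>. aa z = sm (fps_const \<mu> * fps_X) z)"
proof -
  define \<gamma> where "\<gamma> = fps_nth (H x y) (p + (p+k))"
  have hxy: "H x y = fps_const \<gamma> * fps_X^(p + (p+k))" unfolding \<gamma>_def by (rule cross_form[OF x y])
  have hyx: "H y x = fps_const \<gamma> * fps_const ((-1)^(p + (p+k))) * fps_X^(p + (p+k))"
    using Hsym[OF x(1) y(1)] hxy by (simp add: neg_X_power)
  define \<sigma> where "\<sigma> = ((-1::complex)^k)"
  obtain t where t: "\<beta> * t * t + 2 * \<gamma> * t + \<sigma> * \<alpha> = 0" using quad_root hy(2) by blast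
  have tnz: "t \<noteq> 0" using t hx(2) by (auto simp: \<sigma>_def)
  define z where "z = pl (sm (fps_X^k) x) (sm (fps_const t) y)"
  have zC: "z \<in> C" unfolding z_def using x y by simp
  have znz: "z \<noteq> z0" unfolding z_def using NZ tnz by blast
  have sig: "(-1::complex)^k * (-1)^(p + (p+k)) = 1"
  proof -
    have "(-1::complex)^k * (-1)^(p + (p+k)) = (-1)^(2*(p+k))" by (simp flip: power_add) (simp add: algebra_simps)
    also have "\<dots> = 1" by (simp add: power_mult)
    finally show ?thesis .
  qed
  let ?P = "fps_X^(2*(p+k)) :: complex fps"
  have T1: "H (sm (fps_X^k) x) (sm (fps_X^k) x) = fps_const (\<sigma> * \<alpha>) * ?P"
    using x y hx by (simp add: HL_sm HR_sm neg_X_power \<sigma>_def power_add mult_2_right mult_ac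
      flip: fps_const_mult)
  have T2: "H (sm (fps_X^k) x) (sm (fps_const t) y) = fps_const (t * \<gamma>) * ?P"
    using x y hxy by (simp add: HL_sm HR_sm power_add mult_2 mult_2_right mult_ac)
  have T3: "H (sm (fps_const t) y) (sm (fps_X^k) x) = fps_const (t * \<gamma> * ((-1)^k * (-1)^(p + (p+k)))) * ?P"
    using x y hyx by (simp add: HL_sm HR_sm neg_X_power power_add mult_2 mult_2_right mult_ac)
  have T4: "H (sm (fps_const t) y) (sm (fps_const t) y) = fps_const (t * t * \<beta>) * ?P"
    using x y hy by (simp add: HL_sm HR_sm mult_ac)
  have "H z z = H (sm (fps_X^k) x) (sm (fps_X^k) x) + H (sm (fps_X^k) x) (sm (fps_const t) y)
     + H (sm (fps_const t) y) (sm (fps_X^k) x) + H (sm (fps_const t) y) (sm (fps_const t) y)"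
    unfolding z_def using x y by (simp add: HL_add HR_add)
  also have "\<dots> = fps_const (\<sigma> * \<alpha> + t * \<gamma> + t * \<gamma> + t * t * \<beta>) * ?P"
    unfolding T1 T2 T3 T4 sig by (simp only: mult_1_right fps_const_add[symmetric] distrib_right)
  also have "\<sigma> * \<alpha> + t * \<gamma> + t * \<gamma> + t * t * \<beta> = 0" using t by (simp add: algebra_simps)
  finally have Hzz: "H z z = 0" by simp
  have coef: "fps_X^k * (fps_const (of_nat p) * fps_X) + of_nat k * fps_X * fps_X^k
      = fps_const (of_nat (p+k)) * fps_X * (fps_X^k :: complex fps)"
    by (simp add: algebra_simps fps_of_nat flip: fps_const_add)
  have az1: "aa (sm (fps_X^k) x) = sm (fps_const (of_nat (p+k)) * fps_X * fps_X^k) x"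
  proof -
    have "aa (sm (fps_X^k) x) = pl (sm (fps_X^k * (fps_const (of_nat p) * fps_X)) x) (sm (of_nat k * fps_X * fps_X^k) x)"
      using a_sm[OF x(1), of "fps_X^k"] x by (simp add: X2_deriv_Xpow)
    also have "\<dots> = sm (fps_X^k * (fps_const (of_nat p) * fps_X) + of_nat k * fps_X * fps_X^k) x"
      using x by (simp add: sm_add_left)
    finally show ?thesis unfolding coef .
  qed
  have az2: "aa (sm (fps_const t) y) = sm (fps_const t * (fps_const (of_nat (p+k)) * fps_X)) y"
    using a_const[OF y(1), of t] y by simp
  have "aa z = sm (fps_const (of_nat (p+k)) * fps_X) z"
    unfolding z_def using x y az1 az2 by (simp add: a_add sm_add_right mult_ac)
  thus ?thesis using zC znz Hzz by blast
qed

end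




context herm begin

lemma neg_X_power_nz: "(- fps_X :: complex fps)^m \<noteq> 0"
  by (simp add: neg_X_power)

lemma subdegree_neg_X_power: "subdegree ((- fps_X :: complex fps)^m) = m"
  by (simp add: neg_X_power fps_X_power_subdegree)

lemma X2_deriv_mult: "fps_X^2 * fps_deriv (B * Q) = B * (fps_X^2 * fps_deriv Q) + fps_X^2 * fps_deriv B * (Q :: complex fps)"
  by (simp add: fps_deriv_mult algebra_simps)

lemma reflect_of_nat[simp]: "fps_reflect (of_nat m) = of_nat m"
  by (metis fps_of_nat reflect_const)

lemma saturate:
  assumes z: "z \<in> C" "z \<noteq> z0" "H z z = 0" "aa z = sm (fps_const \<mu> * fps_X) z"
  shows "\<exists>w\<in>C. \<exists>y0\<in>C. H w w = 0 \<and> H w y0 = 1 \<and> (\<exists>c. aa w = sm c w)"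
proof -
  have "\<exists>u\<in>C. H z u \<noteq> 0"
  proof (rule ccontr)
    assume "\<not> ?thesis"
    hence "\<And>u. u \<in> C \<Longrightarrow> H u z = H u z0" using Hsym[OF z(1)] z(1) by simp
    hence "z = z0" using h_inj z(1) by simp
    thus False using z(2) by simp
  qed
  hence ex: "\<exists>m. \<exists>y\<in>C. H z y \<noteq> 0 \<and> subdegree (H z y) = m" by blast
  define m where "m = (LEAST m. \<exists>y\<in>C. H z y \<noteq> 0 \<and> subdegree (H z y) = m)"
  obtain y1 where y1: "y1 \<in> C" "H z y1 \<noteq> 0" "subdegree (H z y1) = m"
    using LeastI_ex[OF ex] unfolding m_def by blast
  have mle: "m \<le> subdegree (H z y)" if "y \<in> C" "H z y \<noteq> 0" for y
    unfolding m_def using that by (auto intro: Least_le)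
  have msub: "m \<le> subdegree (H u z)" if "u \<in> C" "H u z \<noteq> 0" for u
  proof -
    have "H u z = fps_reflect (H z u)" using Hsym[OF z(1) that(1)] .
    thus ?thesis using mle[OF that(1)] that(2) by auto
  qed
  have div: "H u z = fps_shift m (H u z) * fps_X^m" if "u \<in> C" for u
  proof (cases "H u z = 0")
    case False thus ?thesis using msub[OF that False] by (simp add: fps_shift_times_fps_X_power)
  qed simp
  define \<phi> where "\<phi> u = fps_shift m (H u z)" for u
  have "\<exists>w\<in>C. \<forall>u\<in>C. \<phi> u = H u w"
  proof (rule h_surj')
    fix x y assume "x \<in> C" "y \<in> C"
    thus "\<phi> (pl x y) = \<phi> x + \<phi> y" unfolding \<phi>_def using z(1) by (simp add: HL_add fps_shift_add)
  next
    fix s x assume x: "x \<in> C"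
    show "\<phi> (sm s x) = s * \<phi> x"
    proof (cases "H x z = 0")
      case True thus ?thesis unfolding \<phi>_def using x z(1) by (simp add: HL_sm)
    next
      case False thus ?thesis unfolding \<phi>_def using x z(1) msub[OF x False]
        by (simp add: HL_sm fps_shift_mult)
    qed
  qed
  then obtain w where w: "w \<in> C" "\<And>u. u \<in> C \<Longrightarrow> \<phi> u = H u w" by blast
  let ?P = "fps_X^m :: complex fps"
  have hw: "H u z = H u w * ?P" if "u \<in> C" for u using div[OF that] w(2)[OF that] unfolding \<phi>_def by simp
  have Pnz: "?P \<noteq> 0" by simp
  have "0 = H z w * ?P" using hw[OF z(1)] z(3) by simp
  also have "H z w = fps_reflect (H w z)" using Hsym[OF w(1) z(1)] .
  also have "\<dots> = fps_reflect (H w w) * (- fps_X)^m" using hw[OF w(1)] by simp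
  finally have "fps_reflect (H w w) * (- fps_X)^m * ?P = 0" by simp
  hence Hww: "H w w = 0" using Pnz neg_X_power_nz by simp
  define T where "T = H w y1"
  have "H z y1 = fps_reflect (H y1 z)" using Hsym[OF y1(1) z(1)] .
  also have "\<dots> = fps_reflect (H y1 w) * (- fps_X)^m" using hw[OF y1(1)] by simp
  also have "fps_reflect (H y1 w) = T" unfolding T_def using Hsym[OF y1(1) w(1)] by simp
  finally have zy1: "H z y1 = T * (- fps_X)^m" .
  have Tnz: "T \<noteq> 0" using zy1 y1(2) by auto
  have "subdegree (H z y1) = subdegree T + m" unfolding zy1 using Tnz neg_X_power_nz
    by (simp add: subdegree_neg_X_power)
  hence "subdegree T = 0" using y1(3) by simp
  hence T0: "fps_nth T 0 \<noteq> 0" using Tnz by (metis nth_subdegree_nonzero)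
  define y0 where "y0 = sm (fps_reflect (inverse T)) y1"
  have y0C: "y0 \<in> C" unfolding y0_def using y1 by simp
  have Hwy0: "H w y0 = 1" unfolding y0_def using w(1) y1(1) T0 by (simp add: HR_sm T_def[symmetric] inverse_mult_eq_1)
  define c where "c = fps_const (\<mu> - of_nat m) * fps_X"
  have "aa w = sm c w"
  proof (rule h_inj)
    show "aa w \<in> C" "sm c w \<in> C" using w by auto
    fix u assume u: "u \<in> C"
    define A where "A = H (aa u) w"
    define B where "B = H u w"
    have "H u (aa z) = H (aa u) z - fps_X^2 * fps_deriv (H u z)" using Ha u z(1) by simp
    also have "\<dots> = A * ?P - fps_X^2 * fps_deriv (B * ?P)" unfolding A_def B_def using hw u by simp
    also have "\<dots> = A * ?P - fps_X^2 * fps_deriv B * ?P - B * (of_nat m * fps_X * ?P)"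
      unfolding X2_deriv_mult[of B ?P] X2_deriv_Xpow by (simp add: algebra_simps)
    finally have e1: "H u (aa z) = A * ?P - fps_X^2 * fps_deriv B * ?P - B * (of_nat m * fps_X * ?P)" .
    have "H u (aa z) = - (fps_const \<mu> * fps_X) * (B * ?P)" unfolding B_def using z(4) u z(1) hw[OF u] by (simp add: HR_sm)
    hence "(A - fps_X^2 * fps_deriv B - of_nat m * fps_X * B + fps_const \<mu> * fps_X * B) * ?P = 0"
      using e1 by (simp add: algebra_simps)
    hence E0: "A - fps_X^2 * fps_deriv B - of_nat m * fps_X * B + fps_const \<mu> * fps_X * B = 0"
      using Pnz by simp
    have "A - fps_X^2 * fps_deriv B = (A - fps_X^2 * fps_deriv B - of_nat m * fps_X * B + fps_const \<mu> * fps_X * B)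
       + (of_nat m * fps_X * B - fps_const \<mu> * fps_X * B)" by (simp add: algebra_simps)
    hence "A - fps_X^2 * fps_deriv B = of_nat m * fps_X * B - fps_const \<mu> * fps_X * B"
      unfolding E0 by simp
    moreover have "H u (aa w) = A - fps_X^2 * fps_deriv B" unfolding A_def B_def using Ha u w(1) by simp
    moreover have "H u (sm c w) = of_nat m * fps_X * B - fps_const \<mu> * fps_X * B"
      unfolding B_def c_def using u w(1) by (simp add: HR_sm algebra_simps fps_of_nat flip: fps_const_sub)
    ultimately show "H u (aa w) = H u (sm c w)" by simp
  qed
  thus ?thesis using w(1) y0C Hww Hwy0 by blast
qed

end




lemma iso_inv:
  assumes iso: "ab_iso_map M N h"
    and cadd: "\<forall>x\<in>ab_carr M. \<forall>y\<in>ab_carr M. ab_add M x y \<in> ab_carr M"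
    and csm: "\<forall>s. \<forall>x\<in>ab_carr M. ab_smul M s x \<in> ab_carr M"
    and ca: "\<forall>x\<in>ab_carr M. ab_a M x \<in> ab_carr M"
  shows "ab_iso_map N M (inv_into (ab_carr M) h)"
proof -
  let ?g = "inv_into (ab_carr M) h"
  have bij: "bij_betw h (ab_carr M) (ab_carr N)" and hom: "ab_hom M N h" using iso unfolding ab_iso_map_def by auto
  have inj: "inj_on h (ab_carr M)" and img: "h ` ab_carr M = ab_carr N" using bij by (auto simp: bij_betw_def)
  have gh: "\<And>x. x \<in> ab_carr M \<Longrightarrow> ?g (h x) = x" using inj by (rule inv_into_f_f)
  have bij': "bij_betw ?g (ab_carr N) (ab_carr M)" using bij by (rule bij_betw_inv_into)
  have "ab_hom N M ?g" unfolding ab_hom_def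
  proof (intro conjI ballI allI)
    fix X assume "X \<in> ab_carr N"
    thus "?g X \<in> ab_carr M" using bij' by (meson bij_betwE)
  next
    fix X Y assume XY: "X \<in> ab_carr N" "Y \<in> ab_carr N"
    then obtain x y where xy: "x \<in> ab_carr M" "y \<in> ab_carr M" "X = h x" "Y = h y" using img by blast
    have "ab_add N X Y = h (ab_add M x y)" using hom xy unfolding ab_hom_def by simp
    thus "?g (ab_add N X Y) = ab_add M (?g X) (?g Y)" using gh xy cadd by simp
  next
    fix s X assume X: "X \<in> ab_carr N"
    then obtain x where x: "x \<in> ab_carr M" "X = h x" using img by blast
    have "ab_smul N s X = h (ab_smul M s x)" using hom x unfolding ab_hom_def by simp
    thus "?g (ab_smul N s X) = ab_smul M s (?g X)" using gh x csm by simp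
  next
    fix X assume X: "X \<in> ab_carr N"
    then obtain x where x: "x \<in> ab_carr M" "X = h x" using img by blast
    have "ab_a N X = h (ab_a M x)" using hom x unfolding ab_hom_def by simp
    thus "?g (ab_a N X) = ab_a M (?g X)" using gh x ca by simp
  qed
  thus ?thesis using bij' unfolding ab_iso_map_def by simp
qed

locale iso_setup = herm E H for E :: "'v abmod" and H +
  fixes w y0 c
  assumes wC: "w \<in> C" and y0C: "y0 \<in> C" and Hww: "H w w = 0" and Hwy0: "H w y0 = 1"
    and aw: "aa w = sm c w"
begin

definition "F1 = {sm s w | s. True}"
definition "Fn1 = {v\<in>C. H v w = 0}"

lemma Hy0w: "H y0 w = 1" using Hsym[OF wC y0C] Hwy0 by simp

lemma F1_iff: "u \<in> F1 \<longleftrightarrow> (\<exists>s. u = sm s w)" unfolding F1_def by blast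

lemma F1C: "F1 \<subseteq> C" unfolding F1_def using wC by auto
lemma Fn1C: "Fn1 \<subseteq> C" unfolding Fn1_def by auto

lemma F1_sub: "is_sub E F1"
  unfolding is_sub_def
proof (intro conjI ballI allI)
  show "F1 \<subseteq> C" by (rule F1C)
  show "z0 \<in> F1" unfolding F1_iff using wC by (intro exI[of _ 0]) simp
next
  fix x y assume "x \<in> F1" "y \<in> F1"
  then obtain s t where "x = sm s w" "y = sm t w" unfolding F1_iff by blast
  thus "pl x y \<in> F1" unfolding F1_iff using wC by (intro exI[of _ "s + t"]) (simp add: sm_add_left)
next
  fix s x assume "x \<in> F1"
  then obtain t where "x = sm t w" unfolding F1_iff by blast
  thus "sm s x \<in> F1" unfolding F1_iff using wC by (intro exI[of _ "s * t"]) simp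
next
  fix x assume "x \<in> F1"
  then obtain t where "x = sm t w" unfolding F1_iff by blast
  thus "aa x \<in> F1" unfolding F1_iff using wC a_sm[OF wC, of t] aw
    by (intro exI[of _ "t * c + fps_X^2 * fps_deriv t"]) (simp add: sm_add_left)
qed

lemma Fn1_sub: "is_sub E Fn1"
  unfolding is_sub_def
proof (intro conjI ballI allI)
  show "Fn1 \<subseteq> C" by (rule Fn1C)
  show "z0 \<in> Fn1" unfolding Fn1_def using wC by simp
next
  fix x y assume "x \<in> Fn1" "y \<in> Fn1"
  thus "pl x y \<in> Fn1" unfolding Fn1_def using wC by (simp add: HL_add)
next
  fix s x assume "x \<in> Fn1"
  thus "sm s x \<in> Fn1" unfolding Fn1_def using wC by (simp add: HL_sm)
next
  fix x assume x: "x \<in> Fn1"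
  have "H x (aa w) = H (aa x) w - fps_X^2 * fps_deriv (H x w)" using Ha x wC Fn1C by auto
  moreover have "H x (aa w) = 0" using x aw wC Fn1C by (auto simp: HR_sm Fn1_def)
  ultimately show "aa x \<in> Fn1" using x unfolding Fn1_def by simp
qed

lemma F1_Fn1: "F1 \<subseteq> Fn1"
  unfolding F1_def Fn1_def using wC by (auto simp: HL_sm Hww)

lemma H_F1_right: "v \<in> C \<Longrightarrow> u \<in> F1 \<Longrightarrow> H v u = fps_reflect (SOME s. u = sm s w) * H v w"
  unfolding F1_iff using wC by (metis (mono_tags, lifting) HR_sm someI_ex)

lemma H_Fn1_F1: "v \<in> Fn1 \<Longrightarrow> u \<in> F1 \<Longrightarrow> H v u = 0"
  using wC Fn1C unfolding F1_iff Fn1_def by (auto simp: HR_sm)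

lemma H_F1_Fn1: "u \<in> F1 \<Longrightarrow> v \<in> Fn1 \<Longrightarrow> H u v = 0"
proof -
  assume u: "u \<in> F1" and v: "v \<in> Fn1"
  have "H u v = fps_reflect (H v u)" using Hsym F1C Fn1C u v by (meson subsetD)
  thus ?thesis using H_Fn1_F1[OF v u] by simp
qed

lemma sm_w_inj: "sm s w = sm t w \<Longrightarrow> s = t"
proof -
  assume "sm s w = sm t w"
  hence "H (sm s w) y0 = H (sm t w) y0" by simp
  thus "s = t" using wC y0C by (simp add: HL_sm Hwy0)
qed

lemma rank_F1: "has_rank (restr E F1) 1"
  unfolding has_rank_def
proof (intro exI[of _ "[w]"] conjI)
  show "is_basis (restr E F1) [w]" unfolding is_basis_def
  proof (intro conjI ballI)
    have "w \<in> F1" unfolding F1_iff using wC by (intro exI[of _ 1]) simp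
    thus "set [w] \<subseteq> ab_carr (restr E F1)" by simp
    fix x assume "x \<in> ab_carr (restr E F1)"
    then obtain s where s: "x = sm s w" using F1_iff by auto
    show "\<exists>!cs. length cs = length [w] \<and> lincomb (restr E F1) cs [w] = x"
    proof (rule ex1I[of _ "[s]"])
      show "length [s] = length [w] \<and> lincomb (restr E F1) [s] [w] = x" using s wC by simp
      fix d assume d: "length d = length [w] \<and> lincomb (restr E F1) d [w] = x"
      then obtain d0 where "d = [d0]" by (cases d) auto
      thus "d = [s]" using d s wC sm_w_inj by simp
    qed
  qed
qed simp

lemma rank_Fn1: assumes "has_rank E n" shows "has_rank (restr E Fn1) (n - 1)"
proof -
  obtain es where es: "is_basis E es" "length es = n" using assms unfolding has_rank_def by blast
  have "has_rank (restr E {v\<in>C. H v w = 0}) (length es - 1)"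
    by (rule elim_basis[OF es(1), of "\<lambda>v. H v w" y0]) (use wC y0C Hy0w in \<open>auto simp: HL_add HL_sm\<close>)
  thus ?thesis using es unfolding Fn1_def by simp
qed

lemma normal_Fn1: "normal_sub E Fn1"
proof -
  interpret Q1: pmq E Fn1 by unfold_locales (rule Fn1_sub)
  define K where "K = {sm s y0 | s. True}"
  have Kb: "is_basis (restr E K) [y0]" unfolding is_basis_def
  proof (intro conjI ballI)
    show "set [y0] \<subseteq> ab_carr (restr E K)" unfolding K_def using y0C by (auto intro: exI[of _ 1])
    fix x assume "x \<in> ab_carr (restr E K)"
    then obtain s where s: "x = sm s y0" unfolding K_def by auto
    show "\<exists>!cs. length cs = length [y0] \<and> lincomb (restr E K) cs [y0] = x"
    proof (rule ex1I[of _ "[s]"])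
      show "length [s] = length [y0] \<and> lincomb (restr E K) [s] [y0] = x" using s y0C by simp
      fix d assume d: "length d = length [y0] \<and> lincomb (restr E K) d [y0] = x"
      then obtain d0 where d0: "d = [d0]" by (cases d) auto
      hence "sm d0 y0 = sm s y0" using d s y0C by simp
      hence "H (sm d0 y0) w = H (sm s y0) w" by simp
      thus "d = [s]" using d0 y0C wC by (simp add: HL_sm Hy0w)
    qed
  qed
  have "is_basis (quot E Fn1) (map Q1.cs [y0])"
  proof (rule Q1.quot_basis_complement[OF _ Kb])
    show "K \<subseteq> C" unfolding K_def using y0C by auto
    show "z0 \<in> K" unfolding K_def using y0C by (auto intro: exI[of _ 0])
    show "\<forall>x\<in>K. \<forall>y\<in>K. pl x y \<in> K" unfolding K_def using y0C
      by (auto simp: sm_add_left[symmetric] intro: exI)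
    show "\<forall>s. \<forall>x\<in>K. sm s x \<in> K" unfolding K_def using y0C by (auto intro: exI)
    show "\<forall>v\<in>C. \<exists>k\<in>K. Q1.cs v = Q1.cs k"
    proof
      fix v assume v: "v \<in> C"
      have "pl v (sm (-1) (sm (H v w) y0)) \<in> Fn1" unfolding Fn1_def using v y0C wC
        by (simp add: HL_add HL_sm Hy0w)
      hence "Q1.cs v = Q1.cs (sm (H v w) y0)" using Q1.coset_eq_iff[of v "sm (H v w) y0"] v y0C by simp
      thus "\<exists>k\<in>K. Q1.cs v = Q1.cs k" unfolding K_def by blast
    qed
    show "\<forall>k\<in>K. k \<in> Fn1 \<longrightarrow> k = z0"
      unfolding K_def Fn1_def using y0C wC by (auto simp: HL_sm Hy0w)
  qed
  thus ?thesis unfolding normal_sub_def has_rank_def using Fn1_sub by (intro conjI exI) auto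
qed

lemma normal_F1: assumes "has_rank E n" shows "normal_sub E F1"
proof -
  interpret Q1: pmq E F1 by unfold_locales (rule F1_sub)
  obtain es where es: "is_basis E es" "length es = n" using assms unfolding has_rank_def by blast
  define K where "K = {v\<in>C. H v y0 = 0}"
  have "has_rank (restr E K) (length es - 1)" unfolding K_def
    by (rule elim_basis[OF es(1), of "\<lambda>v. H v y0" w]) (use wC y0C Hwy0 in \<open>auto simp: HL_add HL_sm\<close>)
  then obtain ks where Kb: "is_basis (restr E K) ks" unfolding has_rank_def by blast
  have "is_basis (quot E F1) (map Q1.cs ks)"
  proof (rule Q1.quot_basis_complement[OF _ Kb])
    show "K \<subseteq> C" unfolding K_def by auto
    show "z0 \<in> K" unfolding K_def using y0C by simp
    show "\<forall>x\<in>K. \<forall>y\<in>K. pl x y \<in> K" unfolding K_def using y0C by (auto simp: HL_add)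
    show "\<forall>s. \<forall>x\<in>K. sm s x \<in> K" unfolding K_def using y0C by (auto simp: HL_sm)
    show "\<forall>v\<in>C. \<exists>k\<in>K. Q1.cs v = Q1.cs k"
    proof
      fix v assume v: "v \<in> C"
      define k where "k = pl v (sm (- H v y0) w)"
      have kK: "k \<in> K" unfolding k_def K_def using v y0C wC by (simp add: HL_add HL_sm Hwy0)
      have "pl v (sm (-1) k) = sm (H v y0) w"
      proof (rule h_inj)
        show "pl v (sm (-1) k) \<in> C" "sm (H v y0) w \<in> C" unfolding k_def using v wC by auto
        fix u assume u: "u \<in> C"
        show "H u (pl v (sm (-1) k)) = H u (sm (H v y0) w)"
          unfolding k_def using u v wC by (simp add: HR_add HR_sm algebra_simps)
      qed
      hence "Q1.cs v = Q1.cs k" using v kK K_def Q1.coset_eq_iff[of v k] by (auto simp: F1_iff)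
      thus "\<exists>k\<in>K. Q1.cs v = Q1.cs k" using kK by blast
    qed
    show "\<forall>k\<in>K. k \<in> F1 \<longrightarrow> k = z0"
      unfolding K_def F1_iff using y0C wC by (auto simp: HL_sm Hwy0)
  qed
  thus ?thesis unfolding normal_sub_def has_rank_def using F1_sub by (intro conjI exI) auto
qed

end




lemma adjoint_simps[simp]: "ab_carr (adjoint M) = ab_carr (dual M)"
  "ab_add (adjoint M) = (\<lambda>\<phi> \<psi> x. \<phi> x + \<psi> x)"
  "ab_smul (adjoint M) = (\<lambda>s \<phi> x. fps_reflect s * \<phi> x)"
  "ab_a (adjoint M) = (\<lambda>\<phi> x. - (if x \<in> ab_carr M then fps_X^2 * fps_deriv (\<phi> x) - \<phi> (ab_a M x) else 0))"
  by (simp_all add: adjoint_def fun_eq_iff)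

context iso_setup begin

lemma adj_iso: "ab_isomorphic (adjoint (quot E Fn1)) (restr E F1)"
proof -
  interpret Q1: pmq E Fn1 by unfold_locales (rule Fn1_sub)
  let ?Q = "quot E Fn1"
  define \<Psi> where "\<Psi> u = (\<lambda>X. if X \<in> ab_carr ?Q then H (SOME x. x \<in> X) u else 0)" for u
  have carr: "ab_carr ?Q = Q1.cs ` C" by (rule Q1.q_carr)
  have \<Psi>cs: "\<Psi> u (Q1.cs v) = H v u" if v: "v \<in> C" and u: "u \<in> F1" for u v
  proof -
    obtain f where f: "f \<in> Fn1" "(SOME x. x \<in> Q1.cs v) = pl v f" using Q1.rep_coset[OF v] by blast
    have "Q1.cs v \<in> ab_carr ?Q" using v carr by simp
    moreover have "H (pl v f) u = H v u"
    proof -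
      have fC: "f \<in> C" and uC: "u \<in> C" using f(1) u Fn1C F1C by auto
      show ?thesis using HL_add[OF v fC uC] H_Fn1_F1[OF f(1) u] by simp
    qed
    ultimately show ?thesis unfolding \<Psi>_def using f by simp
  qed
  have \<Psi>out: "\<Psi> u X = 0" if "X \<notin> ab_carr ?Q" for u X unfolding \<Psi>_def using that by simp
  have \<Psi>in: "\<Psi> u \<in> ab_carr (dual ?Q)" if u: "u \<in> F1" for u
    unfolding dual_carr
  proof (intro conjI ballI allI impI)
    fix X Y assume "X \<in> ab_carr ?Q" "Y \<in> ab_carr ?Q"
    then obtain v v' where vv: "v \<in> C" "v' \<in> C" "X = Q1.cs v" "Y = Q1.cs v'" using carr by auto
    show "\<Psi> u (ab_add ?Q X Y) = \<Psi> u X + \<Psi> u Y"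
      using vv u F1C by (auto simp: Q1.q_add \<Psi>cs HL_add)
  next
    fix s X assume "X \<in> ab_carr ?Q"
    then obtain v where vv: "v \<in> C" "X = Q1.cs v" using carr by auto
    show "\<Psi> u (ab_smul ?Q s X) = s * \<Psi> u X"
      using vv u F1C by (auto simp: Q1.q_sm \<Psi>cs HL_sm)
  next
    fix X assume "X \<notin> ab_carr ?Q" thus "\<Psi> u X = 0" by (rule \<Psi>out)
  qed
  have hom: "ab_hom (restr E F1) (adjoint ?Q) \<Psi>"
    unfolding ab_hom_def restr_simps adjoint_simps
  proof (intro conjI ballI allI)
    fix u assume "u \<in> F1" thus "\<Psi> u \<in> ab_carr (dual ?Q)" by (rule \<Psi>in)
  next
    fix u u' assume u: "u \<in> F1" "u' \<in> F1"
    show "\<Psi> (pl u u') = (\<lambda>x. \<Psi> u x + \<Psi> u' x)"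
    proof
      fix X show "\<Psi> (pl u u') X = \<Psi> u X + \<Psi> u' X"
      proof (cases "X \<in> ab_carr ?Q")
        case True
        then obtain v where v: "v \<in> C" "X = Q1.cs v" using carr by auto
        have "pl u u' \<in> F1" using u F1_sub unfolding is_sub_def by blast
        moreover have "u \<in> C" "u' \<in> C" using u F1C by auto
        ultimately show ?thesis using v u by (simp add: \<Psi>cs HR_add)
      qed (simp add: \<Psi>out)
    qed
  next
    fix s u assume u: "u \<in> F1"
    show "\<Psi> (sm s u) = (\<lambda>x. fps_reflect s * \<Psi> u x)"
    proof
      fix X show "\<Psi> (sm s u) X = fps_reflect s * \<Psi> u X"
      proof (cases "X \<in> ab_carr ?Q")
        case True
        then obtain v where v: "v \<in> C" "X = Q1.cs v" using carr by auto
        have "sm s u \<in> F1" using u F1_sub unfolding is_sub_def by blast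
        thus ?thesis using v u F1C by (auto simp: \<Psi>cs HR_sm)
      qed (simp add: \<Psi>out)
    qed
  next
    fix u assume u: "u \<in> F1"
    show "\<Psi> (aa u) = (\<lambda>x. - (if x \<in> ab_carr ?Q then fps_X\<^sup>2 * fps_deriv (\<Psi> u x) - \<Psi> u (ab_a ?Q x) else 0))"
    proof
      fix X show "\<Psi> (aa u) X = - (if X \<in> ab_carr ?Q then fps_X\<^sup>2 * fps_deriv (\<Psi> u X) - \<Psi> u (ab_a ?Q X) else 0)"
      proof (cases "X \<in> ab_carr ?Q")
        case True
        then obtain v where v: "v \<in> C" "X = Q1.cs v" using carr by auto
        have "aa u \<in> F1" using u F1_sub unfolding is_sub_def by blast
        moreover have "uC": "u \<in> C" using u F1C by auto
        ultimately show ?thesis using v u True by (simp add: \<Psi>cs Q1.q_a Ha)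
      qed (simp add: \<Psi>out)
    qed
  qed
  have inj: "inj_on \<Psi> F1"
  proof
    fix u u' assume u: "u \<in> F1" "u' \<in> F1" and eq: "\<Psi> u = \<Psi> u'"
    obtain s s' where s: "u = sm s w" "u' = sm s' w" using u F1_iff by blast
    have "\<Psi> u (Q1.cs y0) = \<Psi> u' (Q1.cs y0)" using eq by simp
    hence "H y0 u = H y0 u'" using \<Psi>cs y0C u by simp
    hence "fps_reflect s = fps_reflect s'" using s y0C wC by (simp add: HR_sm Hy0w)
    thus "u = u'" using s by (simp add: reflect_inj)
  qed
  have surj: "\<Psi> ` F1 = ab_carr (adjoint ?Q)"
  proof
    show "\<Psi> ` F1 \<subseteq> ab_carr (adjoint ?Q)" using \<Psi>in by auto
  next
    show "ab_carr (adjoint ?Q) \<subseteq> \<Psi> ` F1"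
    proof
      fix \<phi> assume "\<phi> \<in> ab_carr (adjoint ?Q)"
      hence \<phi>: "\<phi> \<in> ab_carr (dual ?Q)" by simp
      have \<phi>sm: "\<And>s X. X \<in> ab_carr ?Q \<Longrightarrow> \<phi> (ab_smul ?Q s X) = s * \<phi> X"
        and \<phi>out: "\<And>X. X \<notin> ab_carr ?Q \<Longrightarrow> \<phi> X = 0" using \<phi> unfolding dual_carr by auto
      define u where "u = sm (fps_reflect (\<phi> (Q1.cs y0))) w"
      have uF: "u \<in> F1" unfolding u_def F1_iff by blast
      have "\<Psi> u = \<phi>"
      proof
        fix X show "\<Psi> u X = \<phi> X"
        proof (cases "X \<in> ab_carr ?Q")
          case True
          then obtain v where v: "v \<in> C" "X = Q1.cs v" using carr by auto
          have "pl v (sm (-1) (sm (H v w) y0)) \<in> Fn1" unfolding Fn1_def using v y0C wC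
            by (simp add: HL_add HL_sm Hy0w)
          hence "Q1.cs v = Q1.cs (sm (H v w) y0)" using Q1.coset_eq_iff[of v "sm (H v w) y0"] v y0C by simp
          also have "\<dots> = ab_smul ?Q (H v w) (Q1.cs y0)" using y0C by (simp add: Q1.q_sm)
          finally have "\<phi> X = H v w * \<phi> (Q1.cs y0)" using v \<phi>sm y0C carr by simp
          moreover have "\<Psi> u X = H v u" using v uF \<Psi>cs by simp
          moreover have "H v u = \<phi> (Q1.cs y0) * H v w" unfolding u_def using v wC by (simp add: HR_sm)
          ultimately show ?thesis by (simp add: mult.commute)
        qed (simp add: \<Psi>out \<phi>out)
      qed
      thus "\<phi> \<in> \<Psi> ` F1" using uF by blast
    qed
  qed
  have "ab_iso_map (restr E F1) (adjoint ?Q) \<Psi>"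
    unfolding ab_iso_map_def bij_betw_def using hom inj surj by simp
  hence "ab_iso_map (adjoint ?Q) (restr E F1) (inv_into F1 \<Psi>)"
    using iso_inv[of "restr E F1" "adjoint ?Q" \<Psi>] F1_sub unfolding is_sub_def by simp
  thus ?thesis unfolding ab_isomorphic_def by blast
qed

end




context iso_setup begin

lemma proj_Fn1: "u \<in> C \<Longrightarrow> pl u (sm (- H u w) y0) \<in> Fn1"
  unfolding Fn1_def using wC y0C by (simp add: HL_add HL_sm Hy0w)

lemma perp_F1: assumes d: "d \<in> C" and perp: "\<And>v. v \<in> Fn1 \<Longrightarrow> H v d = 0" shows "d \<in> F1"
proof -
  have "d = sm (fps_reflect (H y0 d)) w"
  proof (rule h_inj)
    show "d \<in> C" "sm (fps_reflect (H y0 d)) w \<in> C" using d wC by auto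
    fix u assume u: "u \<in> C"
    have "0 = H (pl u (sm (- H u w) y0)) d" using perp proj_Fn1 u by simp
    also have "\<dots> = H u d - H u w * H y0 d" using u y0C d by (simp add: HL_add HL_sm)
    finally show "H u d = H u (sm (fps_reflect (H y0 d)) w)" using u wC by (simp add: HR_sm)
  qed
  thus ?thesis unfolding F1_iff by blast
qed

lemma herm_quot: "hermitian (quot (restr E Fn1) F1)"
proof -
  let ?N = "restr E Fn1"
  have pmN: "ab_premodule ?N" by (rule sub_premodule[OF Fn1_sub])
  have subN: "is_sub ?N F1" using F1_sub F1_Fn1 unfolding is_sub_def by auto
  interpret Q2: pmq ?N F1 by (unfold_locales) (rule pmN, rule subN)
  let ?Q = "quot ?N F1"
  have carr: "ab_carr ?Q = Q2.cs ` Fn1" using Q2.q_carr by simp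
  have qadd: "ab_add ?Q (Q2.cs x) (Q2.cs y) = Q2.cs (pl x y)" if "x \<in> Fn1" "y \<in> Fn1" for x y
    using Q2.q_add that by simp
  have qsm: "ab_smul ?Q s (Q2.cs x) = Q2.cs (sm s x)" if "x \<in> Fn1" for s x
    using Q2.q_sm that by simp
  have qa: "ab_a ?Q (Q2.cs x) = Q2.cs (aa x)" if "x \<in> Fn1" for x
    using Q2.q_a that by simp
  have Fn1_add: "pl x y \<in> Fn1" and Fn1_sm: "sm s x \<in> Fn1" and Fn1_a: "aa x \<in> Fn1"
    if "x \<in> Fn1" "y \<in> Fn1" for x y s using Fn1_sub that unfolding is_sub_def by auto
  have Fn1_sm': "sm s x \<in> Fn1" and Fn1_a': "aa x \<in> Fn1" if "x \<in> Fn1" for x s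
    using Fn1_sub that unfolding is_sub_def by auto
  have FC: "\<And>x. x \<in> Fn1 \<Longrightarrow> x \<in> C" using Fn1C by auto
  define H' where "H' X Y = H (SOME x. x \<in> X) (SOME y. y \<in> Y)" for X Y
  have key: "H' (Q2.cs v) (Q2.cs y) = H v y" if v: "v \<in> Fn1" and y: "y \<in> Fn1" for v y
  proof -
    obtain f where f: "f \<in> F1" "(SOME x. x \<in> Q2.cs v) = pl v f" using Q2.rep_coset[of v] v by auto
    obtain g where g: "g \<in> F1" "(SOME x. x \<in> Q2.cs y) = pl y g" using Q2.rep_coset[of y] y by auto
    have fC: "f \<in> C" "g \<in> C" using f g F1C by auto
    have "H (pl v f) (pl y g) = H v y + H v g + (H f y + H f g)"
      using v y fC FC by (simp add: HL_add HR_add)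
    also have "\<dots> = H v y" using H_Fn1_F1[OF v g(1)] H_F1_Fn1[OF f(1) y] H_F1_Fn1[OF f(1)] g(1) F1_Fn1
      by auto
    finally show ?thesis unfolding H'_def using f g by simp
  qed
  have ex_rep: "\<And>X. X \<in> ab_carr ?Q \<Longrightarrow> \<exists>v\<in>Fn1. X = Q2.cs v" using carr by auto
  have hf': "herm_form ?Q H'"
    unfolding herm_form_def conj_simps E0_a
  proof (intro conjI ballI allI)
    fix V V' W assume "V \<in> ab_carr ?Q" "V' \<in> ab_carr ?Q" "W \<in> ab_carr ?Q"
    then obtain v v' y where "v \<in> Fn1" "v' \<in> Fn1" "y \<in> Fn1" "V = Q2.cs v" "V' = Q2.cs v'" "W = Q2.cs y"
      using ex_rep by metis
    thus "H' (ab_add ?Q V V') W = H' V W + H' V' W"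
      by (simp add: qadd key Fn1_add HL_add FC)
  next
    fix V W W' assume "V \<in> ab_carr ?Q" "W \<in> ab_carr ?Q" "W' \<in> ab_carr ?Q"
    then obtain v y y' where "v \<in> Fn1" "y \<in> Fn1" "y' \<in> Fn1" "V = Q2.cs v" "W = Q2.cs y" "W' = Q2.cs y'"
      using ex_rep by metis
    thus "H' V (ab_add ?Q W W') = H' V W + H' V W'"
      by (simp add: qadd key Fn1_add HR_add FC)
  next
    fix s V W assume "V \<in> ab_carr ?Q" "W \<in> ab_carr ?Q"
    then obtain v y where "v \<in> Fn1" "y \<in> Fn1" "V = Q2.cs v" "W = Q2.cs y"
      using ex_rep by metis
    thus "H' (ab_smul ?Q s V) W = s * H' V W"
      by (simp add: qsm key Fn1_sm' HL_sm FC)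
  next
    fix s V W assume "V \<in> ab_carr ?Q" "W \<in> ab_carr ?Q"
    then obtain v y where "v \<in> Fn1" "y \<in> Fn1" "V = Q2.cs v" "W = Q2.cs y"
      using ex_rep by metis
    thus "H' V (ab_smul ?Q (fps_reflect s) W) = s * H' V W"
      by (simp add: qsm key Fn1_sm' HR_sm FC)
  next
    fix V W assume "V \<in> ab_carr ?Q" "W \<in> ab_carr ?Q"
    then obtain v y where vy: "v \<in> Fn1" "y \<in> Fn1" "V = Q2.cs v" "W = Q2.cs y"
      using ex_rep by metis
    have "fps_X^2 * fps_deriv (H v y) = H (aa v) y + H v (sm (-1) (aa y))" using Ha0 vy FC by simp
    thus "fps_X^2 * fps_deriv (H' V W) = H' (ab_a ?Q V) W + H' V (ab_smul ?Q (-1) (ab_a ?Q W))"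
      using vy by (simp add: qsm qa key Fn1_sm' Fn1_a')
  next
    fix V W assume "V \<in> ab_carr ?Q" "W \<in> ab_carr ?Q"
    then obtain v y where vy: "v \<in> Fn1" "y \<in> Fn1" "V = Q2.cs v" "W = Q2.cs y"
      using ex_rep by metis
    thus "H' W V = fps_reflect (H' V W)" using Hsym[of v y] FC by (simp add: key)
  qed
  define h' where "h' Y = (\<lambda>X. if X \<in> ab_carr ?Q then H' X Y else 0)" for Y
  have csQ: "Q2.cs v \<in> ab_carr ?Q" if "v \<in> Fn1" for v using that carr by simp
  have h'cs: "h' (Q2.cs y) (Q2.cs v) = H v y" if "v \<in> Fn1" "y \<in> Fn1" for v y
    unfolding h'_def using that csQ key by simp
  have h'out: "h' Y X = 0" if "X \<notin> ab_carr ?Q" for X Y unfolding h'_def using that by simp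
  have h'in: "h' Y \<in> ab_carr (dual ?Q)" if Y: "Y \<in> ab_carr ?Q" for Y
  proof -
    obtain y where y: "y \<in> Fn1" "Y = Q2.cs y" using ex_rep Y by blast
    show ?thesis unfolding dual_carr
    proof (intro conjI ballI allI impI)
      fix X X' assume "X \<in> ab_carr ?Q" "X' \<in> ab_carr ?Q"
      then obtain v v' where "v \<in> Fn1" "v' \<in> Fn1" "X = Q2.cs v" "X' = Q2.cs v'" using ex_rep by metis
      thus "h' Y (ab_add ?Q X X') = h' Y X + h' Y X'" using y by (simp add: qadd h'cs Fn1_add HL_add FC)
    next
      fix s X assume "X \<in> ab_carr ?Q"
      then obtain v where "v \<in> Fn1" "X = Q2.cs v" using ex_rep by metis
      thus "h' Y (ab_smul ?Q s X) = s * h' Y X" using y by (simp add: qsm h'cs Fn1_sm' HL_sm FC)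
    next
      fix X assume "X \<notin> ab_carr ?Q" thus "h' Y X = 0" by (rule h'out)
    qed
  qed
  have hom: "ab_hom ?Q (adjoint ?Q) h'"
    unfolding ab_hom_def adjoint_simps
  proof (intro conjI ballI allI)
    fix Y assume "Y \<in> ab_carr ?Q" thus "h' Y \<in> ab_carr (dual ?Q)" by (rule h'in)
  next
    fix Y Y' assume "Y \<in> ab_carr ?Q" "Y' \<in> ab_carr ?Q"
    then obtain y y' where yy: "y \<in> Fn1" "y' \<in> Fn1" "Y = Q2.cs y" "Y' = Q2.cs y'" using ex_rep by metis
    show "h' (ab_add ?Q Y Y') = (\<lambda>x. h' Y x + h' Y' x)"
    proof
      fix X show "h' (ab_add ?Q Y Y') X = h' Y X + h' Y' X"
      proof (cases "X \<in> ab_carr ?Q")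
        case True
        then obtain v where "v \<in> Fn1" "X = Q2.cs v" using ex_rep by metis
        thus ?thesis using yy by (simp add: qadd h'cs Fn1_add HR_add FC)
      qed (simp add: h'out)
    qed
  next
    fix s Y assume "Y \<in> ab_carr ?Q"
    then obtain y where yy: "y \<in> Fn1" "Y = Q2.cs y" using ex_rep by metis
    show "h' (ab_smul ?Q s Y) = (\<lambda>x. fps_reflect s * h' Y x)"
    proof
      fix X show "h' (ab_smul ?Q s Y) X = fps_reflect s * h' Y X"
      proof (cases "X \<in> ab_carr ?Q")
        case True
        then obtain v where "v \<in> Fn1" "X = Q2.cs v" using ex_rep by metis
        thus ?thesis using yy by (simp add: qsm h'cs Fn1_sm' HR_sm FC)
      qed (simp add: h'out)
    qed
  next
    fix Y assume "Y \<in> ab_carr ?Q"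
    then obtain y where yy: "y \<in> Fn1" "Y = Q2.cs y" using ex_rep by metis
    show "h' (ab_a ?Q Y) = (\<lambda>x. - (if x \<in> ab_carr ?Q then fps_X\<^sup>2 * fps_deriv (h' Y x) - h' Y (ab_a ?Q x) else 0))"
    proof
      fix X show "h' (ab_a ?Q Y) X = - (if X \<in> ab_carr ?Q then fps_X\<^sup>2 * fps_deriv (h' Y X) - h' Y (ab_a ?Q X) else 0)"
      proof (cases "X \<in> ab_carr ?Q")
        case True
        then obtain v where v: "v \<in> Fn1" "X = Q2.cs v" using ex_rep by metis
        have "H v (aa y) = H (aa v) y - fps_X^2 * fps_deriv (H v y)" using Ha v yy FC by simp
        thus ?thesis using yy v True by (simp add: qa h'cs Fn1_a')
      qed (simp add: h'out)
    qed
  qed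
  have inj: "inj_on h' (ab_carr ?Q)"
  proof
    fix Y Y' assume "Y \<in> ab_carr ?Q" "Y' \<in> ab_carr ?Q" and eq: "h' Y = h' Y'"
    then obtain y y' where yy: "y \<in> Fn1" "y' \<in> Fn1" "Y = Q2.cs y" "Y' = Q2.cs y'" using ex_rep by metis
    define d where "d = pl y (sm (-1) y')"
    have dF: "d \<in> Fn1" unfolding d_def using yy Fn1_add Fn1_sm' by simp
    have "d \<in> F1"
    proof (rule perp_F1)
      show "d \<in> C" using dF FC by simp
      fix v assume v: "v \<in> Fn1"
      have "h' Y (Q2.cs v) = h' Y' (Q2.cs v)" using eq by simp
      hence "H v y = H v y'" using h'cs v yy by simp
      thus "H v d = 0" unfolding d_def using v yy FC by (simp add: HR_add HR_sm)
    qed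
    thus "Y = Y'" using Q2.coset_eq_iff[of y y'] yy unfolding d_def by simp
  qed
  have surj: "h' ` ab_carr ?Q = ab_carr (adjoint ?Q)"
  proof
    show "h' ` ab_carr ?Q \<subseteq> ab_carr (adjoint ?Q)" using h'in by auto
  next
    show "ab_carr (adjoint ?Q) \<subseteq> h' ` ab_carr ?Q"
    proof
      fix \<phi> assume "\<phi> \<in> ab_carr (adjoint ?Q)"
      hence \<phi>: "\<phi> \<in> ab_carr (dual ?Q)" by simp
      have \<phi>add: "\<And>X X'. X \<in> ab_carr ?Q \<Longrightarrow> X' \<in> ab_carr ?Q \<Longrightarrow> \<phi> (ab_add ?Q X X') = \<phi> X + \<phi> X'"
        and \<phi>sm: "\<And>s X. X \<in> ab_carr ?Q \<Longrightarrow> \<phi> (ab_smul ?Q s X) = s * \<phi> X"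
        and \<phi>out: "\<And>X. X \<notin> ab_carr ?Q \<Longrightarrow> \<phi> X = 0" using \<phi> unfolding dual_carr by auto
      define P where "P u = pl u (sm (- H u w) y0)" for u
      have PF: "P u \<in> Fn1" if "u \<in> C" for u unfolding P_def using proj_Fn1 that by simp
      have Padd: "P (pl u u') = pl (P u) (P u')" if "u \<in> C" "u' \<in> C" for u u'
      proof (rule h_inj)
        show "P (pl u u') \<in> C" "pl (P u) (P u') \<in> C" unfolding P_def using that y0C by auto
        fix x assume "x \<in> C"
        thus "H x (P (pl u u')) = H x (pl (P u) (P u'))" unfolding P_def using that y0C wC
          by (simp add: HR_add HR_sm HL_add algebra_simps)
      qed
      have Psm: "P (sm s u) = sm s (P u)" if "u \<in> C" for u s
      proof (rule h_inj)
        show "P (sm s u) \<in> C" "sm s (P u) \<in> C" unfolding P_def using that y0C by auto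
        fix x assume "x \<in> C"
        thus "H x (P (sm s u)) = H x (sm s (P u))" unfolding P_def using that y0C wC
          by (simp add: HR_add HR_sm HL_sm algebra_simps)
      qed
      define \<psi> where "\<psi> u = \<phi> (Q2.cs (P u))" for u
      have "\<exists>y\<in>C. \<forall>u\<in>C. \<psi> u = H u y"
      proof (rule h_surj')
        fix u u' assume u: "u \<in> C" "u' \<in> C"
        have "Q2.cs (P (pl u u')) = ab_add ?Q (Q2.cs (P u)) (Q2.cs (P u'))"
          using Padd[OF u] qadd[OF PF[OF u(1)] PF[OF u(2)]] by simp
        thus "\<psi> (pl u u') = \<psi> u + \<psi> u'" unfolding \<psi>_def using \<phi>add csQ PF u by simp
      next
        fix s u assume u: "u \<in> C"
        have "Q2.cs (P (sm s u)) = ab_smul ?Q s (Q2.cs (P u))"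
          using Psm[OF u] qsm[OF PF[OF u]] by simp
        thus "\<psi> (sm s u) = s * \<psi> u" unfolding \<psi>_def using \<phi>sm csQ PF u by simp
      qed
      then obtain y where y: "y \<in> C" "\<And>u. u \<in> C \<Longrightarrow> \<psi> u = H u y" by blast
      have Pid: "P v = v" if "v \<in> Fn1" for v
      proof -
        have "H v w = 0" using that unfolding Fn1_def by simp
        hence "P v = pl v (sm 0 y0)" unfolding P_def by simp
        thus "P v = v" using FC[OF that] y0C by simp
      qed
      have wF: "w \<in> Fn1" unfolding Fn1_def using wC Hww by simp
      have wF1: "w \<in> F1" unfolding F1_iff using wC by (intro exI[of _ 1]) simp
      have z0F: "z0 \<in> Fn1" using Fn1_sub unfolding is_sub_def by simp
      have "Q2.cs w = Q2.cs z0" using Q2.coset_eq_iff[of w z0] wF wF1 FC z0F by simp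
      also have "\<dots> = ab_smul ?Q 0 (Q2.cs z0)" using qsm[of z0 0] Fn1_sub unfolding is_sub_def by simp
      finally have "\<phi> (Q2.cs w) = 0" using \<phi>sm csQ Fn1_sub unfolding is_sub_def by auto
      hence "H w y = 0" using y(2)[OF wC] Pid[OF wF] unfolding \<psi>_def by simp
      hence yF: "y \<in> Fn1" unfolding Fn1_def using y(1) Hsym[OF wC y(1)] by simp
      have "h' (Q2.cs y) = \<phi>"
      proof
        fix X show "h' (Q2.cs y) X = \<phi> X"
        proof (cases "X \<in> ab_carr ?Q")
          case True
          then obtain v where v: "v \<in> Fn1" "X = Q2.cs v" using ex_rep by metis
          thus ?thesis using h'cs[OF v(1) yF] y(2)[of v] FC Pid[OF v(1)] unfolding \<psi>_def by simp
        qed (simp add: h'out \<phi>out)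
      qed
      thus "\<phi> \<in> h' ` ab_carr ?Q" using csQ yF by blast
    qed
  qed
  have "ab_iso_map ?Q (adjoint ?Q) h'" unfolding ab_iso_map_def bij_betw_def using hom inj surj by simp
  hence "herm_nondeg ?Q H'" unfolding herm_nondeg_def h'_def by simp
  thus ?thesis unfolding hermitian_def using hf' by blast
qed

end




context herm begin

lemma NZ:
  assumes x: "x \<in> C" and Fx: "F = {sm s x | s. True}" and y: "y \<in> C" "y \<noteq> z0"
    and Gy: "G = {sm s y | s. True}" and nG: "normal_sub E G" and FG: "F \<noteq> G" and t: "t \<noteq> 0"
  shows "pl (sm (fps_X^k) x) (sm (fps_const t) y) \<noteq> z0"
proof
  assume eq: "pl (sm (fps_X^k) x) (sm (fps_const t) y) = z0"
  have rel: "fps_reflect (fps_X^k) * H v x + fps_const t * H v y = 0" if v: "v \<in> C" for v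
  proof -
    have "H v (pl (sm (fps_X^k) x) (sm (fps_const t) y)) = 0" using eq v by simp
    thus ?thesis using v x y by (simp add: HR_add HR_sm del: reflect_power)
  qed
  have ti: "fps_const (inverse t) * fps_const t = 1" using t by simp
  have yrel: "y = sm (fps_const (- inverse t) * fps_X^k) x"
  proof (rule h_inj)
    show "y \<in> C" "sm (fps_const (- inverse t) * fps_X^k) x \<in> C" using x y by auto
    fix v assume v: "v \<in> C"
    have r2: "fps_const t * H v y = - (fps_reflect (fps_X^k) * H v x)"
      using rel[OF v] by (simp only: eq_neg_iff_add_eq_0 add.commute)
    have "H v y = fps_const (inverse t) * (fps_const t * H v y)" using ti by (simp add: mult.assoc[symmetric])
    also have "\<dots> = fps_const (inverse t) * (- (fps_reflect (fps_X^k) * H v x))" by (simp only: r2)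
    also have "\<dots> = H v (sm (fps_const (- inverse t) * fps_X^k) x)" using v x
      by (simp add: HR_sm algebra_simps del: reflect_power flip: fps_const_neg)
    finally show "H v y = H v (sm (fps_const (- inverse t) * fps_X^k) x)" .
  qed
  show False
  proof (cases k)
    case 0
    have yx: "y = sm (fps_const (- inverse t)) x" using yrel 0 by simp
    have c1: "fps_const (- t) * fps_const (- inverse t) = 1" using t by simp
    have xy: "x = sm (fps_const (- t)) y" using yx x c1 by (simp del: fps_const_mult)
    have "F = G"
    proof
      show "F \<subseteq> G" unfolding Fx Gy using xy y by (auto intro: exI[of _ "_ * fps_const (- t)"])
      show "G \<subseteq> F" unfolding Fx Gy using yx x by (auto intro: exI[of _ "_ * fps_const (- inverse t)"])
    qed
    thus False using FG by simp
  next
    case (Suc j)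
    define u where "u = sm (fps_const (- inverse t) * fps_X^j) x"
    have uC: "u \<in> C" unfolding u_def using x by simp
    have yu: "y = sm fps_X u" unfolding u_def using yrel Suc x by (simp add: mult_ac)
    have uG: "u \<notin> G"
    proof
      assume "u \<in> G"
      then obtain s where s: "u = sm s y" using Gy by blast
      have yy: "y = sm (fps_X * s) y" using yu s y by simp
      have "y = z0"
      proof (rule h_inj)
        show "y \<in> C" "z0 \<in> C" using y by auto
        fix v assume v: "v \<in> C"
        have "H v y = fps_reflect (fps_X * s) * H v y" using yy v y(1) HR_sm[OF v y(1), of "fps_X * s"] by simp
        hence h0: "H v y - fps_reflect (fps_X * s) * H v y = 0" by (metis diff_self)
        have "(1 - fps_reflect (fps_X * s)) * H v y = H v y - fps_reflect (fps_X * s) * H v y"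
          by (simp add: algebra_simps del: reflect_mult)
        hence "(1 - fps_reflect (fps_X * s)) * H v y = 0" using h0 by simp
        moreover have "1 - fps_reflect (fps_X * s) \<noteq> 0"
        proof
          assume "1 - fps_reflect (fps_X * s) = 0"
          hence "fps_nth (1 - fps_reflect (fps_X * s)) 0 = 0" by simp
          thus False by simp
        qed
        ultimately show "H v y = H v z0" using v by simp
      qed
      thus False using y by simp
    qed
    have subG: "is_sub E G" using nG unfolding normal_sub_def by simp
    interpret Q: pmq E G by unfold_locales (rule subG)
    interpret QP: pm "quot E G" by unfold_locales (rule Q.q_premodule)
    obtain m vs where vs: "is_basis (quot E G) vs" using nG unfolding normal_sub_def has_rank_def by blast
    have yG: "y \<in> G" unfolding Gy using y by (auto intro: exI[of _ 1])
    have "ab_smul (quot E G) fps_X (Q.cs u) = Q.cs y" using Q.q_sm[OF uC] yu by simp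
    also have "\<dots> = Q.cs z0" using Q.coset_eq_iff[of y z0] y yG by simp
    also have "\<dots> = ab_zero (quot E G)" by (simp add: Q.q_zero)
    finally have "Q.cs u = ab_zero (quot E G)"
      using QP.torsion_free_basis[OF vs, of "Q.cs u" fps_X] uC by (simp add: Q.q_carr)
    hence "Q.cs u = Q.cs z0" by (simp add: Q.q_zero)
    hence "u \<in> G" using Q.coset_eq_iff[of u z0] uC by simp
    thus False using uG by simp
  qed
qed

end

theorem mainTheorem3:
  fixes E :: "'v abmod" and n :: nat and lam f g :: complex and F G :: "'v set"
  assumes "is_abmod E" and "has_rank E n" and "regular E" and "hermitian E"
    and "normal_sub E F" and "normal_sub E G" and "F \<noteq> G"
    and "ab_isomorphic (restr E F) (E_elem f)"
    and "ab_isomorphic (restr E G) (E_elem g)"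
    and "f - lam \<in> \<int>" and "g - lam \<in> \<int>"
  shows "\<exists>F1 Fn1. normal_sub E F1 \<and> normal_sub E Fn1 \<and> F1 \<subseteq> Fn1 \<and>
           has_rank (restr E F1) 1 \<and> has_rank (restr E Fn1) (n - 1) \<and>
           ab_isomorphic (adjoint (quot E Fn1)) (restr E F1) \<and>
           hermitian (quot (restr E Fn1) F1)"
proof -
  have pmE: "ab_premodule E" using assms(1) unfolding is_abmod_def by simp
  obtain H where hf: "herm_form E H" and nd: "herm_nondeg E H" using assms(4) unfolding hermitian_def by blast
  interpret herm E H by unfold_locales (rule pmE, rule hf, rule nd)
  have subF: "is_sub E F" and subG: "is_sub E G" using assms(5,6) unfolding normal_sub_def by auto
  obtain x where x: "x \<in> F" "F = {sm s x | s. True}" "aa x = sm (fps_const f * fps_X) x" "x \<noteq> z0"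
    using elem_gen[OF subF assms(8)] by blast
  obtain y where y: "y \<in> G" "G = {sm s y | s. True}" "aa y = sm (fps_const g * fps_X) y" "y \<noteq> z0"
    using elem_gen[OF subG assms(9)] by blast
  have xC: "x \<in> C" and yC: "y \<in> C" using x(1) y(1) subF subG unfolding is_sub_def by auto
  have "\<exists>z\<in>C. z \<noteq> z0 \<and> H z z = 0 \<and> (\<exists>\<mu>. aa z = sm (fps_const \<mu> * fps_X) z)"
  proof (cases "H x x = 0")
    case True thus ?thesis using xC x by blast
  next
    case Fx: False
    show ?thesis
    proof (cases "H y y = 0")
      case True thus ?thesis using yC y by blast
    next
      case Fy: False
      obtain p where p: "f = of_nat p" "H x x = fps_const (fps_nth (H x x) (2*p)) * fps_X^(2*p)"
        "fps_nth (H x x) (2*p) \<noteq> 0" using param_nat[OF xC x(3) Fx] by blast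
      obtain q where q: "g = of_nat q" "H y y = fps_const (fps_nth (H y y) (2*q)) * fps_X^(2*q)"
        "fps_nth (H y y) (2*q) \<noteq> 0" using param_nat[OF yC y(3) Fy] by blast
      show ?thesis
      proof (cases "p \<le> q")
        case True
        then obtain k where k: "q = p + k" using le_Suc_ex by blast
        show ?thesis
          by (rule iso_vec[of x p y k "fps_nth (H x x) (2*p)" "fps_nth (H y y) (2*q)"])
             (use xC yC x y p q k NZ[OF xC x(2) yC y(4) y(2) assms(6) assms(7)] in auto)
      next
        case False
        then obtain k where k: "p = q + k" using le_Suc_ex[of q p] by auto
        have GF: "G \<noteq> F" using assms(7) by simp
        show ?thesis
          by (rule iso_vec[of y q x k "fps_nth (H y y) (2*q)" "fps_nth (H x x) (2*p)"])
             (use xC yC x y p q k NZ[OF yC y(2) xC x(4) x(2) assms(5) GF] in auto)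
      qed
    qed
  qed
  then obtain z \<mu> where z: "z \<in> C" "z \<noteq> z0" "H z z = 0" "aa z = sm (fps_const \<mu> * fps_X) z" by blast
  obtain w y0 c where w: "w \<in> C" "y0 \<in> C" "H w w = 0" "H w y0 = 1" "aa w = sm c w"
    using saturate[OF z] by blast
  interpret S: iso_setup E H w y0 c by unfold_locales (use w in auto)
  show ?thesis
    apply (rule exI[of _ S.F1], rule exI[of _ S.Fn1])
    by (intro conjI S.normal_F1[OF assms(2)] S.normal_Fn1 S.F1_Fn1 S.rank_F1 S.rank_Fn1[OF assms(2)]
          S.adj_iso S.herm_quot)
qed



end
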